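(* Let $(R,\mathfrak{m})$ be a Noetherian local ring and let $I$ be an ideal of $R$. Let $x_1,\ldots,x_s,y$ be a minimal generating set of $I$, where $J=(x_1,\ldots,x_s)$ is a reduction of $I$ with reduction number $r=\mathrm{r}_J(I)$. Assume that (a) $x_1,\ldots,x_s$ is a $d$-sequence, and (b) $(x_1,\ldots,x_i)\cap I^{r+1}=(x_1,\ldots,x_i)I^r$ for all $i=1,\ldots,s-1$. Then $\mathrm{rt}(I)\leq \mathrm{r}_J(I)+1$. Suppose in addition that (c) $x_1,\ldots,x_s$ is an $R$-sequence and (d) $(x_1,\ldots,x_i)\cap I^{r}=(x_1,\ldots,x_i)I^{r-1}$ for all $i=1,\ldots,s-1$. Then $\mathrm{rt}(I)=\mathrm{r}_J(I)+1$ and there is a form $Y^{r+1}-\sum_{i=1}^s X_iF_i\in Q_{r+1}$, with $F_i\in V_r$, such that $Q=(Y^{r+1}-\sum_iX_iF_i)+Q\langle r\rangle$.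
   Context: $J\subseteq I$ is a reduction of $I$ if $I^{m+1}=JI^m$ for some $m\ge0$; $\mathrm{r}_J(I)$ is the least such $m$; $I^0=R$. With $J_0=0$, $J_i=(x_1,\ldots,x_i)$, the sequence $x_1,\ldots,x_s$ is a $d$-sequence if $(J_i:x_{i+1}x_j)=(J_i:x_j)$ for all $0\leq i\leq s-1$, $j\geq i+1$. $V=R[X_1,\ldots,X_s,Y]$ graded by total degree, $V_n$ its degree-$n$ part; $\varphi:V\to\mathbf{R}(I)=\bigoplus_{n\ge0}I^nt^n$ sends $X_i\mapsto x_it$, $Y\mapsto yt$; $Q=\ker\varphi=\bigoplus_{n\ge1}Q_n$; $Q\langle n\rangle$ is the ideal generated by homogeneous elements of $Q$ of degree at most $n$; $\mathrm{rt}(I)$ is the least $N\ge1$ with $Q=Q\langle N\rangle$. *)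

theory Defs
  imports "HOL-Library.Poly_Mapping" "HOL-Computational_Algebra.Polynomial"
begin

definition ideal_in :: "'a::comm_ring_1 set \<Rightarrow> 'a set \<Rightarrow> bool" where
  "ideal_in C A \<longleftrightarrow> A \<subseteq> C \<and> 0 \<in> A \<and> (\<forall>a\<in>A. \<forall>b\<in>A. a + b \<in> A)
     \<and> (\<forall>c\<in>C. \<forall>a\<in>A. c * a \<in> A)"

definition gen_in :: "'a::comm_ring_1 set \<Rightarrow> 'a set \<Rightarrow> 'a set" where
  "gen_in C S = \<Inter>{A. ideal_in C A \<and> S \<subseteq> A}"

abbreviation ideal :: "'a::comm_ring_1 set \<Rightarrow> bool" where
  "ideal A \<equiv> ideal_in UNIV A"

abbreviation gen :: "'a::comm_ring_1 set \<Rightarrow> 'a set" where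
  "gen S \<equiv> gen_in UNIV S"

definition ideal_mult :: "'a::comm_ring_1 set \<Rightarrow> 'a set \<Rightarrow> 'a set" where
  "ideal_mult A B = gen {a * b | a b. a \<in> A \<and> b \<in> B}"

fun ideal_pow :: "'a::comm_ring_1 set \<Rightarrow> nat \<Rightarrow> 'a set" where
  "ideal_pow A 0 = UNIV"
| "ideal_pow A (Suc n) = ideal_mult A (ideal_pow A n)"

definition colon :: "'a::comm_ring_1 set \<Rightarrow> 'a \<Rightarrow> 'a set" where
  "colon A a = {z. z * a \<in> A}"

definition noetherian_ring :: "'a::comm_ring_1 itself \<Rightarrow> bool" where
  "noetherian_ring _ \<longleftrightarrow> (\<forall>A::'a set. ideal A \<longrightarrow> (\<exists>F. finite F \<and> A = gen F))"

definition local_ring :: "'a::comm_ring_1 set \<Rightarrow> bool" where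
  "local_ring m \<longleftrightarrow> ideal m \<and> m \<noteq> UNIV \<and> (\<forall>A. ideal A \<and> A \<noteq> UNIV \<longrightarrow> A \<subseteq> m)"

definition mu :: "'a::comm_ring_1 set \<Rightarrow> nat" where
  "mu A = (LEAST n. \<exists>g::nat \<Rightarrow> 'a. A = gen (g ` {..<n}))"

definition is_reduction :: "'a::comm_ring_1 set \<Rightarrow> 'a set \<Rightarrow> bool" where
  "is_reduction J I \<longleftrightarrow> J \<subseteq> I \<and> (\<exists>m. ideal_pow I (Suc m) = ideal_mult J (ideal_pow I m))"

definition red_num :: "'a::comm_ring_1 set \<Rightarrow> 'a set \<Rightarrow> nat" where
  "red_num J I = (LEAST m. ideal_pow I (Suc m) = ideal_mult J (ideal_pow I m))"

definition Jseq :: "(nat \<Rightarrow> 'a::comm_ring_1) \<Rightarrow> nat \<Rightarrow> 'a set" where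
  "Jseq x i = gen (x ` {1..i})"

definition d_sequence :: "(nat \<Rightarrow> 'a::comm_ring_1) \<Rightarrow> nat \<Rightarrow> bool" where
  "d_sequence x s \<longleftrightarrow> (\<forall>i j. i \<le> s - 1 \<and> i + 1 \<le> j \<and> j \<le> s \<longrightarrow>
       colon (Jseq x i) (x (i+1) * x j) = colon (Jseq x i) (x j))"

definition R_sequence :: "(nat \<Rightarrow> 'a::comm_ring_1) \<Rightarrow> nat \<Rightarrow> bool" where
  "R_sequence x s \<longleftrightarrow> (\<forall>i\<in>{1..s}. \<forall>z. z * x i \<in> Jseq x (i - 1) \<longrightarrow> z \<in> Jseq x (i - 1))
     \<and> Jseq x s \<noteq> UNIV"

text \<open>Multivariate polynomials: finitely supported maps from monomials (exponent vectors
  finitely supported nat-to-nat maps) to coefficients. Variable 0 is Y, variable i (1 \<le> i \<le> s) is X_i.\<close>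
type_synonym 'a mpoly = "(nat \<Rightarrow>\<^sub>0 nat) \<Rightarrow>\<^sub>0 'a"

definition Vset :: "nat \<Rightarrow> 'a::comm_ring_1 mpoly set" where
  "Vset s = {F. \<forall>m\<in>Poly_Mapping.keys F. Poly_Mapping.keys m \<subseteq> {0..s}}"

definition mdeg :: "(nat \<Rightarrow>\<^sub>0 nat) \<Rightarrow> nat" where
  "mdeg m = (\<Sum>i\<in>Poly_Mapping.keys m. Poly_Mapping.lookup m i)"

definition homogeneous :: "nat \<Rightarrow> 'a::comm_ring_1 mpoly \<Rightarrow> bool" where
  "homogeneous n F \<longleftrightarrow> (\<forall>m\<in>Poly_Mapping.keys F. mdeg m = n)"

definition Vdeg :: "nat \<Rightarrow> nat \<Rightarrow> 'a::comm_ring_1 mpoly set" where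
  "Vdeg s n = {F \<in> Vset s. homogeneous n F}"

definition var :: "nat \<Rightarrow> 'a::comm_ring_1 mpoly" where
  "var i = Poly_Mapping.single (Poly_Mapping.single i 1) 1"

abbreviation Yv :: "'a::comm_ring_1 mpoly" where "Yv \<equiv> var 0"
abbreviation Xv :: "nat \<Rightarrow> 'a::comm_ring_1 mpoly" where "Xv i \<equiv> var i"

text \<open>phi from V to R(I), inside R[t], X_i to x_i t, Y to y t.\<close>
definition rees_map :: "(nat \<Rightarrow> 'a::comm_ring_1) \<Rightarrow> 'a \<Rightarrow> 'a mpoly \<Rightarrow> 'a poly" where
  "rees_map x y F = (\<Sum>m\<in>Poly_Mapping.keys F. [:Poly_Mapping.lookup F m:] *
      (\<Prod>i\<in>Poly_Mapping.keys m. (if i = 0 then [:0, y:] else [:0, x i:]) ^ Poly_Mapping.lookup m i))"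

definition Qker :: "(nat \<Rightarrow> 'a::comm_ring_1) \<Rightarrow> 'a \<Rightarrow> nat \<Rightarrow> 'a mpoly set" where
  "Qker x y s = {F \<in> Vset s. rees_map x y F = 0}"

definition Qdeg :: "(nat \<Rightarrow> 'a::comm_ring_1) \<Rightarrow> 'a \<Rightarrow> nat \<Rightarrow> nat \<Rightarrow> 'a mpoly set" where
  "Qdeg x y s n = Qker x y s \<inter> Vdeg s n"

definition Qupto :: "(nat \<Rightarrow> 'a::comm_ring_1) \<Rightarrow> 'a \<Rightarrow> nat \<Rightarrow> nat \<Rightarrow> 'a mpoly set" where
  "Qupto x y s n = gen_in (Vset s) (\<Union>k\<in>{..n}. Qdeg x y s k)"

definition rt :: "(nat \<Rightarrow> 'a::comm_ring_1) \<Rightarrow> 'a \<Rightarrow> nat \<Rightarrow> nat" where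
  "rt x y s = (LEAST N. N \<ge> 1 \<and> Qker x y s = Qupto x y s N)"

end

theory Submission
  imports Defs
begin

lemma pm_expand:
  "(p::'k \<Rightarrow>\<^sub>0 'b::comm_monoid_add) = (\<Sum>k\<in>Poly_Mapping.keys p. Poly_Mapping.single k (Poly_Mapping.lookup p k))"
proof (rule poly_mapping_eqI)
  fix k'
  show "Poly_Mapping.lookup p k' = Poly_Mapping.lookup (\<Sum>k\<in>Poly_Mapping.keys p. Poly_Mapping.single k (Poly_Mapping.lookup p k)) k'"
    by (simp add: lookup_sum lookup_single when_def in_keys_iff)
qed

definition mon :: "(nat \<Rightarrow> 'b::comm_ring_1) \<Rightarrow> (nat \<Rightarrow>\<^sub>0 nat) \<Rightarrow> 'b" where
  "mon z m = (\<Prod>i\<in>Poly_Mapping.keys m. z i ^ Poly_Mapping.lookup m i)"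

lemma mon_superset:
  assumes "finite S" "Poly_Mapping.keys m \<subseteq> S"
  shows "mon z m = (\<Prod>i\<in>S. z i ^ Poly_Mapping.lookup m i)"
  unfolding mon_def
  by (rule prod.mono_neutral_left) (use assms in \<open>auto simp: in_keys_iff\<close>)

lemma keys_add_nat: "Poly_Mapping.keys ((a::'k \<Rightarrow>\<^sub>0 nat) + b) = Poly_Mapping.keys a \<union> Poly_Mapping.keys b"
  by (auto simp: in_keys_iff lookup_add)

lemma mon_add: "mon z (a + b) = mon z a * mon z b"
proof -
  let ?S = "Poly_Mapping.keys a \<union> Poly_Mapping.keys b"
  have "mon z (a+b) = (\<Prod>i\<in>?S. z i ^ Poly_Mapping.lookup (a+b) i)"
    by (rule mon_superset) (auto simp: keys_add_nat)
  also have "\<dots> = (\<Prod>i\<in>?S. z i ^ Poly_Mapping.lookup a i) * (\<Prod>i\<in>?S. z i ^ Poly_Mapping.lookup b i)"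
    by (simp add: lookup_add power_add prod.distrib)
  also have "\<dots> = mon z a * mon z b"
    by (simp add: mon_superset[symmetric])
  finally show ?thesis .
qed

lemma mon_zero [simp]: "mon z 0 = 1"
  by (simp add: mon_def)

lemma mon_single [simp]: "mon z (Poly_Mapping.single i k) = z i ^ k"
  by (simp add: mon_def)

definition evalg :: "('a::comm_ring_1 \<Rightarrow> 'b::comm_ring_1) \<Rightarrow> (nat \<Rightarrow> 'b) \<Rightarrow> 'a mpoly \<Rightarrow> 'b" where
  "evalg \<kappa> z F = (\<Sum>m\<in>Poly_Mapping.keys F. \<kappa> (Poly_Mapping.lookup F m) * mon z m)"

locale hom_coeff =
  fixes \<kappa> :: "'a::comm_ring_1 \<Rightarrow> 'b::comm_ring_1"
  assumes k0: "\<kappa> 0 = 0"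
    and kadd: "\<And>a b. \<kappa> (a + b) = \<kappa> a + \<kappa> b"
    and kmul: "\<And>a b. \<kappa> (a * b) = \<kappa> a * \<kappa> b"
    and k1: "\<kappa> 1 = 1"
begin

lemma evalg_superset:
  assumes "finite S" "Poly_Mapping.keys F \<subseteq> S"
  shows "evalg \<kappa> z F = (\<Sum>m\<in>S. \<kappa> (Poly_Mapping.lookup F m) * mon z m)"
  unfolding evalg_def
  by (rule sum.mono_neutral_left) (use assms in \<open>auto simp: in_keys_iff k0\<close>)

lemma evalg_add: "evalg \<kappa> z (F + G) = evalg \<kappa> z F + evalg \<kappa> z G"
proof -
  let ?S = "Poly_Mapping.keys F \<union> Poly_Mapping.keys G"
  have "evalg \<kappa> z (F + G) = (\<Sum>m\<in>?S. \<kappa> (Poly_Mapping.lookup (F+G) m) * mon z m)"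
    by (rule evalg_superset) (use keys_add[of F G] in auto)
  also have "\<dots> = (\<Sum>m\<in>?S. \<kappa> (Poly_Mapping.lookup F m) * mon z m) + (\<Sum>m\<in>?S. \<kappa> (Poly_Mapping.lookup G m) * mon z m)"
    by (simp add: lookup_add kadd distrib_right sum.distrib)
  also have "\<dots> = evalg \<kappa> z F + evalg \<kappa> z G"
    by (simp add: evalg_superset[symmetric])
  finally show ?thesis .
qed

lemma evalg_0 [simp]: "evalg \<kappa> z 0 = 0"
  by (simp add: evalg_def)

lemma evalg_diff: "evalg \<kappa> z (F - G) = evalg \<kappa> z F - evalg \<kappa> z G"
  using evalg_add[where F="F - G" and G=G] by simp

lemma evalg_sum: "evalg \<kappa> z (sum f A) = (\<Sum>a\<in>A. evalg \<kappa> z (f a))"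
  by (induction A rule: infinite_finite_induct) (auto simp: evalg_add)

lemma evalg_single [simp]: "evalg \<kappa> z (Poly_Mapping.single m c) = \<kappa> c * mon z m"
  by (simp add: evalg_def k0)

lemma evalg_mult: "evalg \<kappa> z (F * G) = evalg \<kappa> z F * evalg \<kappa> z G"
proof -
  have "F * G = (\<Sum>m\<in>Poly_Mapping.keys F. Poly_Mapping.single m (Poly_Mapping.lookup F m)) *
               (\<Sum>m\<in>Poly_Mapping.keys G. Poly_Mapping.single m (Poly_Mapping.lookup G m))"
    by (simp add: pm_expand[symmetric])
  also have "\<dots> = (\<Sum>m\<in>Poly_Mapping.keys F. \<Sum>m'\<in>Poly_Mapping.keys G.
       Poly_Mapping.single (m + m') (Poly_Mapping.lookup F m * Poly_Mapping.lookup G m'))"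
    by (simp add: sum_product mult_single)
  finally have "evalg \<kappa> z (F * G) = (\<Sum>m\<in>Poly_Mapping.keys F. \<Sum>m'\<in>Poly_Mapping.keys G.
       \<kappa> (Poly_Mapping.lookup F m) * mon z m * (\<kappa> (Poly_Mapping.lookup G m') * mon z m'))"
    by (simp add: evalg_sum kmul mon_add algebra_simps)
  also have "\<dots> = evalg \<kappa> z F * evalg \<kappa> z G"
    by (simp add: evalg_def sum_product)
  finally show ?thesis .
qed

lemma evalg_1 [simp]: "evalg \<kappa> z 1 = 1"
  using evalg_single[of z 0 1] by (simp add: k1 del: evalg_single)

lemma evalg_pow: "evalg \<kappa> z (F ^ n) = evalg \<kappa> z F ^ n"
  by (induction n) (auto simp: evalg_mult)

end

interpretation id_hom: hom_coeff "\<lambda>c::'a::comm_ring_1. c"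
  by unfold_locales auto

interpretation const_hom: hom_coeff "\<lambda>c::'a::comm_ring_1. [:c:]"
  by unfold_locales auto


lemma mdeg_superset:
  assumes "finite S" "Poly_Mapping.keys m \<subseteq> S"
  shows "mdeg m = (\<Sum>i\<in>S. Poly_Mapping.lookup m i)"
  unfolding mdeg_def
  by (rule sum.mono_neutral_left) (use assms in \<open>auto simp: in_keys_iff\<close>)

lemma mdeg_add: "mdeg (a + b) = mdeg a + mdeg b"
proof -
  let ?S = "Poly_Mapping.keys a \<union> Poly_Mapping.keys b"
  have "mdeg (a+b) = (\<Sum>i\<in>?S. Poly_Mapping.lookup (a+b) i)"
    by (rule mdeg_superset) (auto simp: keys_add_nat)
  also have "\<dots> = (\<Sum>i\<in>?S. Poly_Mapping.lookup a i) + (\<Sum>i\<in>?S. Poly_Mapping.lookup b i)"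
    by (simp add: lookup_add sum.distrib)
  also have "\<dots> = mdeg a + mdeg b"
    by (simp add: mdeg_superset[symmetric])
  finally show ?thesis .
qed

lemma mdeg_single [simp]: "mdeg (Poly_Mapping.single i k) = k"
  by (simp add: mdeg_def)

lemma mdeg_zero [simp]: "mdeg 0 = 0"
  by (simp add: mdeg_def)

lemma Vset_add: "F \<in> Vset s \<Longrightarrow> G \<in> Vset s \<Longrightarrow> F + G \<in> Vset s"
  unfolding Vset_def using keys_add[of F G] by blast

lemma Vset_diff: "F \<in> Vset s \<Longrightarrow> G \<in> Vset s \<Longrightarrow> F - G \<in> Vset s"
  unfolding Vset_def using keys_diff[of F G] by blast

lemma Vset_uminus: "F \<in> Vset s \<Longrightarrow> - F \<in> Vset s"
  unfolding Vset_def by simp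

lemma Vset_0 [simp]: "0 \<in> Vset s"
  unfolding Vset_def by simp

lemma Vset_single: "Poly_Mapping.keys m \<subseteq> {0..s} \<Longrightarrow> Poly_Mapping.single m c \<in> Vset s"
  unfolding Vset_def by simp

lemma Vset_mult: "F \<in> Vset s \<Longrightarrow> G \<in> Vset s \<Longrightarrow> F * G \<in> Vset s"
  unfolding Vset_def using keys_mult[of F G] by (fastforce simp: keys_add_nat)

lemma Vset_sum: "(\<And>a. a \<in> A \<Longrightarrow> f a \<in> Vset s) \<Longrightarrow> sum f A \<in> Vset s"
  by (induction A rule: infinite_finite_induct) (auto intro: Vset_add)

lemma Vdeg_add: "F \<in> Vdeg s n \<Longrightarrow> G \<in> Vdeg s n \<Longrightarrow> F + G \<in> Vdeg s n"
  unfolding Vdeg_def homogeneous_def using keys_add[of F G] by (auto intro: Vset_add)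

lemma Vdeg_diff: "F \<in> Vdeg s n \<Longrightarrow> G \<in> Vdeg s n \<Longrightarrow> F - G \<in> Vdeg s n"
  unfolding Vdeg_def homogeneous_def using keys_diff[of F G] by (auto intro: Vset_diff)

lemma Vdeg_0 [simp]: "0 \<in> Vdeg s n"
  unfolding Vdeg_def homogeneous_def by simp

lemma Vdeg_single: "Poly_Mapping.keys m \<subseteq> {0..s} \<Longrightarrow> mdeg m = n \<Longrightarrow> Poly_Mapping.single m c \<in> Vdeg s n"
  unfolding Vdeg_def homogeneous_def by (simp add: Vset_single)

lemma Vdeg_mult: "F \<in> Vdeg s a \<Longrightarrow> G \<in> Vdeg s b \<Longrightarrow> F * G \<in> Vdeg s (a + b)"
  unfolding Vdeg_def homogeneous_def using keys_mult[of F G] by (fastforce simp: mdeg_add intro: Vset_mult)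

lemma Vdeg_sum: "(\<And>a. a \<in> A \<Longrightarrow> f a \<in> Vdeg s n) \<Longrightarrow> sum f A \<in> Vdeg s n"
  by (induction A rule: infinite_finite_induct) (auto intro: Vdeg_add)

lemma Vdeg_Vset: "F \<in> Vdeg s n \<Longrightarrow> F \<in> Vset s"
  unfolding Vdeg_def by simp

lemma var_eq: "var i = Poly_Mapping.single (Poly_Mapping.single i 1) 1"
  by (simp add: var_def)

lemma var_Vdeg: "i \<le> s \<Longrightarrow> var i \<in> Vdeg s 1"
  unfolding var_eq by (rule Vdeg_single) auto

lemma const_Vdeg: "Poly_Mapping.single 0 c \<in> Vdeg s 0"
  by (rule Vdeg_single) auto

lemma Yv_pow: "(Yv::'a::comm_ring_1 mpoly) ^ k = Poly_Mapping.single (Poly_Mapping.single 0 k) 1"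
proof (induction k)
  case 0 then show ?case by simp
next
  case (Suc k)
  then show ?case by (simp add: var_eq mult_single single_add[symmetric] add.commute)
qed

lemma Yv_pow_Vdeg: "(Yv::'a::comm_ring_1 mpoly) ^ k \<in> Vdeg s k"
  unfolding Yv_pow by (rule Vdeg_single) auto

section \<open>Evaluations\<close>

definition ev :: "(nat \<Rightarrow> 'a::comm_ring_1) \<Rightarrow> 'a \<Rightarrow> 'a mpoly \<Rightarrow> 'a" where
  "ev x y F = evalg (\<lambda>c. c) (\<lambda>i. if i = 0 then y else x i) F"

definition zt :: "(nat \<Rightarrow> 'a::comm_ring_1) \<Rightarrow> 'a \<Rightarrow> nat \<Rightarrow> 'a poly" where
  "zt x y i = (if i = 0 then [:0, y:] else [:0, x i:])"

lemma rees_eq: "rees_map x y F = evalg (\<lambda>c. [:c:]) (zt x y) F"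
  by (simp add: rees_map_def evalg_def mon_def zt_def)

definition psi :: "'a::comm_ring_1 mpoly \<Rightarrow> 'a poly" where
  "psi F = evalg (\<lambda>c. [:c:]) (\<lambda>i. if i = 0 then [:0, 1:] else 0) F"

lemma pCons0_monom: "[:0, a:] = monom a 1"
  by (simp add: monom_Suc monom_0)

lemma prod_monom: "(\<Prod>i\<in>K. monom (f i) (g i)) = monom (\<Prod>i\<in>K. f i) (\<Sum>i\<in>K. g i)"
  by (induction K rule: infinite_finite_induct) (auto simp: mult_monom monom_0 one_pCons)

lemma mon_zt: "mon (zt x y) m = monom (mon (\<lambda>i. if i = 0 then y else x i) m) (mdeg m)"
proof -
  have "mon (zt x y) m = (\<Prod>i\<in>Poly_Mapping.keys m. monom ((if i = 0 then y else x i) ^ Poly_Mapping.lookup m i) (Poly_Mapping.lookup m i))"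
    unfolding mon_def zt_def by (intro prod.cong refl) (simp add: pCons0_monom monom_power)
  also have "\<dots> = monom (mon (\<lambda>i. if i = 0 then y else x i) m) (mdeg m)"
    by (simp add: prod_monom mon_def mdeg_def)
  finally show ?thesis .
qed

lemma rees_homog:
  assumes "homogeneous n F"
  shows "rees_map x y F = monom (ev x y F) n"
proof -
  have "rees_map x y F = (\<Sum>m\<in>Poly_Mapping.keys F. monom (Poly_Mapping.lookup F m * mon (\<lambda>i. if i = 0 then y else x i) m) n)"
    unfolding rees_eq evalg_def using assms
    by (intro sum.cong refl) (auto simp: homogeneous_def mon_zt smult_monom[symmetric])
  also have "\<dots> = monom (ev x y F) n"
    by (simp add: ev_def evalg_def monom_sum)
  finally show ?thesis .
qed


section \<open>Homogeneous components\<close>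

definition hc :: "nat \<Rightarrow> 'a::comm_ring_1 mpoly \<Rightarrow> 'a mpoly" where
  "hc n F = (\<Sum>m\<in>{m\<in>Poly_Mapping.keys F. mdeg m = n}. Poly_Mapping.single m (Poly_Mapping.lookup F m))"

lemma hc_decomp: "F = (\<Sum>n\<in>mdeg ` Poly_Mapping.keys F. hc n F)"
proof -
  have "F = (\<Sum>m\<in>Poly_Mapping.keys F. Poly_Mapping.single m (Poly_Mapping.lookup F m))"
    by (rule pm_expand)
  also have "\<dots> = (\<Sum>n\<in>mdeg ` Poly_Mapping.keys F. hc n F)"
    unfolding hc_def by (rule sum.image_gen) simp
  finally show ?thesis .
qed

lemma keys_hc: "Poly_Mapping.keys (hc n F) \<subseteq> {m\<in>Poly_Mapping.keys F. mdeg m = n}"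
proof -
  have "Poly_Mapping.keys (hc n F) \<subseteq> (\<Union>m\<in>{m\<in>Poly_Mapping.keys F. mdeg m = n}. Poly_Mapping.keys (Poly_Mapping.single m (Poly_Mapping.lookup F m)))"
    unfolding hc_def by (rule keys_sum)
  also have "\<dots> \<subseteq> {m\<in>Poly_Mapping.keys F. mdeg m = n}" by auto
  finally show ?thesis .
qed

lemma hc_Vdeg: "F \<in> Vset s \<Longrightarrow> hc n F \<in> Vdeg s n"
  using keys_hc[of n F] unfolding Vdeg_def Vset_def homogeneous_def by blast

lemma rees_zero_hc:
  assumes "rees_map x y F = 0"
  shows "ev x y (hc n F) = 0"
proof -
  let ?D = "mdeg ` Poly_Mapping.keys F"
  have "rees_map x y F = (\<Sum>n'\<in>?D. rees_map x y (hc n' F))"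
    unfolding rees_eq by (subst hc_decomp) (simp add: const_hom.evalg_sum)
  also have "\<dots> = (\<Sum>n'\<in>?D. monom (ev x y (hc n' F)) n')"
    by (intro sum.cong refl rees_homog) (use keys_hc in \<open>auto simp: homogeneous_def\<close>)
  finally have "coeff (rees_map x y F) n = (\<Sum>n'\<in>?D. coeff (monom (ev x y (hc n' F)) n') n)"
    by (simp add: coeff_sum)
  also have "\<dots> = (if n \<in> ?D then ev x y (hc n F) else 0)"
    by (simp add: coeff_monom)
  finally have "(if n \<in> ?D then ev x y (hc n F) else 0) = 0" using assms by simp
  moreover have "n \<notin> ?D \<Longrightarrow> hc n F = 0"
    unfolding hc_def by (rule sum.neutral) auto
  ultimately show ?thesis by (auto split: if_splits simp: ev_def)
qed

lemma Qdeg_iff: "F \<in> Qdeg x y s n \<longleftrightarrow> F \<in> Vdeg s n \<and> ev x y F = 0"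
  unfolding Qdeg_def Qker_def Vdeg_def using rees_homog[of n F x y] by auto

lemma ev_add: "ev x y (F + G) = ev x y F + ev x y G"
  by (simp add: ev_def id_hom.evalg_add)
lemma ev_diff: "ev x y (F - G) = ev x y F - ev x y G"
  by (simp add: ev_def id_hom.evalg_diff)
lemma ev_mult: "ev x y (F * G) = ev x y F * ev x y G"
  by (simp add: ev_def id_hom.evalg_mult)
lemma ev_sum: "ev x y (sum f A) = (\<Sum>a\<in>A. ev x y (f a))"
  by (simp add: ev_def id_hom.evalg_sum)
lemma ev_pow: "ev x y (F ^ k) = ev x y F ^ k"
  by (simp add: ev_def id_hom.evalg_pow)
lemma ev_var: "ev x y (var i) = (if i = 0 then y else x i)"
  by (simp add: ev_def var_eq)
lemma ev_const: "ev x y (Poly_Mapping.single 0 c) = c"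
  by (simp add: ev_def)
lemma ev_single: "ev x y (Poly_Mapping.single m c) = c * mon (\<lambda>i. if i = 0 then y else x i) m"
  by (simp add: ev_def)

lemma psi_add: "psi (F + G) = psi F + psi G"
  by (simp add: psi_def const_hom.evalg_add)
lemma psi_diff: "psi (F - G) = psi F - psi G"
  by (simp add: psi_def const_hom.evalg_diff)
lemma psi_mult: "psi (F * G) = psi F * psi G"
  by (simp add: psi_def const_hom.evalg_mult)
lemma psi_sum: "psi (sum f A) = (\<Sum>a\<in>A. psi (f a))"
  by (simp add: psi_def const_hom.evalg_sum)
lemma psi_pow: "psi (F ^ k) = psi F ^ k"
  by (simp add: psi_def const_hom.evalg_pow)
lemma psi_var: "psi (var i) = (if i = 0 then [:0, 1:] else 0)"
  by (simp add: psi_def var_eq)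
lemma psi_const: "psi (Poly_Mapping.single 0 c) = [:c:]"
  by (simp add: psi_def)

section \<open>Ideals\<close>

definition subr :: "'a::comm_ring_1 set \<Rightarrow> bool" where
  "subr C \<longleftrightarrow> 0 \<in> C \<and> -1 \<in> C \<and> (\<forall>a\<in>C. \<forall>b\<in>C. a + b \<in> C \<and> a * b \<in> C)"

lemma subr_UNIV [simp]: "subr UNIV"
  by (simp add: subr_def)

lemma subr_Vset: "subr (Vset s)"
  unfolding subr_def using Vset_add Vset_mult Vset_uminus[of 1 s] Vset_single[of 0 s 1]
  by (auto simp: one_poly_mapping_def[symmetric])

lemma ideal_in_self: "subr C \<Longrightarrow> ideal_in C C"
  by (auto simp: subr_def ideal_in_def)

lemma gen_in_sub: "S \<subseteq> gen_in C S"
  by (auto simp: gen_in_def)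

lemma gen_in_min: "ideal_in C A \<Longrightarrow> S \<subseteq> A \<Longrightarrow> gen_in C S \<subseteq> A"
  by (auto simp: gen_in_def)

lemma gen_in_ideal: "subr C \<Longrightarrow> S \<subseteq> C \<Longrightarrow> ideal_in C (gen_in C S)"
proof -
  assume C: "subr C" and S: "S \<subseteq> C"
  have ne: "C \<in> {A. ideal_in C A \<and> S \<subseteq> A}" using ideal_in_self[OF C] S by auto
  then have sub: "\<Inter> {A. ideal_in C A \<and> S \<subseteq> A} \<subseteq> C" by blast
  show ?thesis
    unfolding gen_in_def using sub by (auto simp: ideal_in_def)
qed

lemma ideal_in_0: "ideal_in C A \<Longrightarrow> 0 \<in> A"
  by (simp add: ideal_in_def)
lemma ideal_in_add: "ideal_in C A \<Longrightarrow> a \<in> A \<Longrightarrow> b \<in> A \<Longrightarrow> a + b \<in> A"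
  by (simp add: ideal_in_def)
lemma ideal_in_mult: "ideal_in C A \<Longrightarrow> c \<in> C \<Longrightarrow> a \<in> A \<Longrightarrow> c * a \<in> A"
  by (simp add: ideal_in_def)
lemma ideal_in_sub: "ideal_in C A \<Longrightarrow> A \<subseteq> C"
  by (simp add: ideal_in_def)
lemma ideal_in_uminus: "subr C \<Longrightarrow> ideal_in C A \<Longrightarrow> a \<in> A \<Longrightarrow> - a \<in> A"
  using ideal_in_mult[of C A "-1" a] by (simp add: subr_def)
lemma ideal_in_diff: "subr C \<Longrightarrow> ideal_in C A \<Longrightarrow> a \<in> A \<Longrightarrow> b \<in> A \<Longrightarrow> a - b \<in> A"
  using ideal_in_add[of C A a "-b"] ideal_in_uminus[of C A b] by simp
lemma ideal_in_sum: "ideal_in C A \<Longrightarrow> (\<And>i. i \<in> K \<Longrightarrow> f i \<in> A) \<Longrightarrow> sum f K \<in> A"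
  by (induction K rule: infinite_finite_induct) (auto intro: ideal_in_0 ideal_in_add)

lemma ideal_UNIV_mult: "ideal A \<Longrightarrow> a \<in> A \<Longrightarrow> c * a \<in> A"
  by (simp add: ideal_in_def)
lemma ideal_UNIV_mult2: "ideal A \<Longrightarrow> a \<in> A \<Longrightarrow> a * c \<in> A"
  using ideal_UNIV_mult[of A a c] by (simp add: mult.commute)
lemma ideal_UNIV_diff: "ideal A \<Longrightarrow> a \<in> A \<Longrightarrow> b \<in> A \<Longrightarrow> a - b \<in> A"
  by (rule ideal_in_diff) auto
lemma ideal_UNIV_uminus: "ideal A \<Longrightarrow> a \<in> A \<Longrightarrow> - a \<in> A"
  by (rule ideal_in_uminus) auto

lemma gen_ideal: "ideal (gen S)"
  by (rule gen_in_ideal) auto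

definition lin :: "(nat \<Rightarrow> 'a::comm_ring_1) \<Rightarrow> nat set \<Rightarrow> 'a set" where
  "lin x K = {\<Sum>l\<in>K. r l * x l | r. True}"

lemma lin_mem: "(\<Sum>l\<in>K. r l * x l) \<in> lin x K"
  unfolding lin_def by blast

lemma lin_E: "a \<in> lin x K \<Longrightarrow> (\<And>r. a = (\<Sum>l\<in>K. r l * x l) \<Longrightarrow> P) \<Longrightarrow> P"
  unfolding lin_def by blast

lemma lin_ideal: "ideal (lin x K)"
  unfolding ideal_in_def
proof (intro conjI ballI)
  show "0 \<in> lin x K" using lin_mem[where K=K and r="\<lambda>_. 0" and x=x] by simp
next
  fix a b assume a: "a \<in> lin x K" and b: "b \<in> lin x K"
  obtain r where ra: "a = (\<Sum>l\<in>K. r l * x l)" using a by (rule lin_E)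
  obtain r' where rb: "b = (\<Sum>l\<in>K. r' l * x l)" using b by (rule lin_E)
  note ab = ra rb
  have "a + b = (\<Sum>l\<in>K. (r l + r' l) * x l)" unfolding ab by (simp add: sum.distrib distrib_right)
  then show "a + b \<in> lin x K" using lin_mem[where K=K and r="\<lambda>l. r l + r' l" and x=x] by simp
next
  fix c a assume "a \<in> lin x K"
  then obtain r where a: "a = (\<Sum>l\<in>K. r l * x l)" by (rule lin_E)
  have "c * a = (\<Sum>l\<in>K. (c * r l) * x l)" unfolding a by (simp add: sum_distrib_left mult.assoc)
  then show "c * a \<in> lin x K" using lin_mem[where K=K and r="\<lambda>l. c * r l" and x=x] by simp
qed simp

lemma gen_lin:
  assumes "finite K"
  shows "gen (x ` K) = lin x K"
proof
  show "gen (x ` K) \<subseteq> lin x K"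
  proof (rule gen_in_min[OF lin_ideal], rule subsetI)
    fix a assume "a \<in> x ` K"
    then obtain l where l: "l \<in> K" "a = x l" by auto
    have "(\<Sum>j\<in>K. (if j = l then 1 else 0) * x j) = (\<Sum>j\<in>K. if j = l then x j else 0)"
      by (rule sum.cong) auto
    also have "\<dots> = a" using l assms by simp
    finally have eq: "(\<Sum>j\<in>K. (if j = l then 1 else 0) * x j) = a" .
    show "a \<in> lin x K" using lin_mem[where K=K and r="\<lambda>j. if j = l then 1 else 0" and x=x] unfolding eq .
  qed
  show "lin x K \<subseteq> gen (x ` K)"
  proof
    fix a assume "a \<in> lin x K"
    then obtain r where "a = (\<Sum>l\<in>K. r l * x l)" by (rule lin_E)
    moreover have "(\<Sum>l\<in>K. r l * x l) \<in> gen (x ` K)"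
      by (rule ideal_in_sum[OF gen_ideal], rule ideal_UNIV_mult[OF gen_ideal])
         (use gen_in_sub[of "x ` K" UNIV] in blast)
    ultimately show "a \<in> gen (x ` K)" by simp
  qed
qed

definition linB :: "(nat \<Rightarrow> 'a::comm_ring_1) \<Rightarrow> nat set \<Rightarrow> 'a set \<Rightarrow> 'a set" where
  "linB x K B = {\<Sum>l\<in>K. x l * b l | b. \<forall>l\<in>K. b l \<in> B}"

lemma linB_mem: "(\<And>l. l \<in> K \<Longrightarrow> b l \<in> B) \<Longrightarrow> (\<Sum>l\<in>K. x l * b l) \<in> linB x K B"
  unfolding linB_def by blast

lemma linB_E: "a \<in> linB x K B \<Longrightarrow> (\<And>b. a = (\<Sum>l\<in>K. x l * b l) \<Longrightarrow> (\<And>l. l \<in> K \<Longrightarrow> b l \<in> B) \<Longrightarrow> P) \<Longrightarrow> P"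
  unfolding linB_def by blast

lemma linB_ideal: 
  assumes B: "ideal B"
  shows "ideal (linB x K B)"
  unfolding ideal_in_def
proof (intro conjI ballI)
  show "0 \<in> linB x K B" using linB_mem[where K=K and b="\<lambda>_. 0" and B=B and x=x] ideal_in_0[OF B] by simp
next
  fix a b assume a: "a \<in> linB x K B" and b: "b \<in> linB x K B"
  obtain r where ra: "a = (\<Sum>l\<in>K. x l * r l)" "\<And>l. l \<in> K \<Longrightarrow> r l \<in> B" using a unfolding linB_def by blast
  obtain r' where rb: "b = (\<Sum>l\<in>K. x l * r' l)" "\<And>l. l \<in> K \<Longrightarrow> r' l \<in> B" using b unfolding linB_def by blast
  note ab = ra(1) rb(1) ra(2) rb(2)
  have "a + b = (\<Sum>l\<in>K. x l * (r l + r' l))" unfolding ab by (simp add: sum.distrib distrib_left)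
  then show "a + b \<in> linB x K B" using linB_mem[where K=K and b="\<lambda>l. r l + r' l" and B=B and x=x] ab(3,4) ideal_in_add[OF B] by simp
next
  fix c a assume "a \<in> linB x K B"
  then obtain r where a: "a = (\<Sum>l\<in>K. x l * r l)" "\<And>l. l \<in> K \<Longrightarrow> r l \<in> B" unfolding linB_def by blast
  have "c * a = (\<Sum>l\<in>K. x l * (c * r l))" unfolding a by (simp add: sum_distrib_left mult.left_commute)
  then show "c * a \<in> linB x K B" using linB_mem[where K=K and b="\<lambda>l. c * r l" and B=B and x=x] a(2) ideal_UNIV_mult[OF B] by simp
qed simp

lemma ideal_mult_ideal: "ideal (ideal_mult A B)"
  unfolding ideal_mult_def by (rule gen_ideal)

lemma ideal_mult_prod: "a \<in> A \<Longrightarrow> b \<in> B \<Longrightarrow> a * b \<in> ideal_mult A B"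
  unfolding ideal_mult_def using gen_in_sub[of "{a * b |a b. a \<in> A \<and> b \<in> B}" UNIV] by blast

lemma ideal_mult_linB:
  assumes "finite K" "ideal B"
  shows "ideal_mult (gen (x ` K)) B = linB x K B"
proof
  show "ideal_mult (gen (x ` K)) B \<subseteq> linB x K B"
    unfolding ideal_mult_def
  proof (rule gen_in_min[OF linB_ideal[OF assms(2)]], rule subsetI)
    fix u assume "u \<in> {a * b |a b. a \<in> gen (x ` K) \<and> b \<in> B}"
    then obtain a b where ab: "u = a * b" "a \<in> gen (x ` K)" "b \<in> B" by blast
    have "a \<in> lin x K" using ab(2) gen_lin[OF assms(1), of x] by simp
    then obtain r where r: "a = (\<Sum>l\<in>K. r l * x l)" by (rule lin_E)
    have "u = (\<Sum>l\<in>K. r l * x l * b)" unfolding ab(1) r by (rule sum_distrib_right)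
    also have "\<dots> = (\<Sum>l\<in>K. x l * (r l * b))" by (rule sum.cong) (simp_all add: ac_simps)
    finally have u: "u = (\<Sum>l\<in>K. x l * (r l * b))" .
    have "\<And>l. l \<in> K \<Longrightarrow> r l * b \<in> B" using ab(3) assms(2) by (simp add: ideal_UNIV_mult)
    from linB_mem[where K=K and b="\<lambda>l. r l * b" and B=B and x=x, OF this]
    show "u \<in> linB x K B" unfolding u .
  qed
  show "linB x K B \<subseteq> ideal_mult (gen (x ` K)) B"
  proof
    fix u assume "u \<in> linB x K B"
    then obtain b where b: "u = (\<Sum>l\<in>K. x l * b l)" "\<And>l. l \<in> K \<Longrightarrow> b l \<in> B" unfolding linB_def by blast
    have "\<And>l. l \<in> K \<Longrightarrow> x l \<in> gen (x ` K)" using gen_in_sub[of "x ` K" UNIV] by blast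
    then have "(\<Sum>l\<in>K. x l * b l) \<in> ideal_mult (gen (x ` K)) B"
      by (intro ideal_in_sum[OF ideal_mult_ideal] ideal_mult_prod b(2))
    then show "u \<in> ideal_mult (gen (x ` K)) B" unfolding b(1) .
  qed
qed

lemma pow_ideal: "ideal (ideal_pow I n)"
proof (cases n)
  case 0 then show ?thesis by (simp add: ideal_in_def)
next
  case (Suc k) then show ?thesis by (simp add: ideal_mult_ideal)
qed

lemma pow1: "ideal I \<Longrightarrow> ideal_pow I 1 = I"
proof -
  assume I: "ideal I"
  have "ideal_mult I UNIV \<subseteq> I"
    unfolding ideal_mult_def by (rule gen_in_min[OF I]) (use I in \<open>auto simp: ideal_UNIV_mult2\<close>)
  moreover have "I \<subseteq> ideal_mult I UNIV"
    using ideal_mult_prod[of _ I 1 UNIV] by auto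
  ultimately show ?thesis by simp
qed

lemma pow_mult:
  assumes I: "ideal I"
  shows "u \<in> ideal_pow I a \<Longrightarrow> v \<in> ideal_pow I b \<Longrightarrow> u * v \<in> ideal_pow I (a + b)"
proof (induction a arbitrary: u v)
  case 0
  then show ?case using ideal_UNIV_mult[OF pow_ideal] by simp
next
  case (Suc a)
  let ?M = "{u. \<forall>v\<in>ideal_pow I b. u * v \<in> ideal_pow I (Suc a + b)}"
  have M: "ideal ?M"
    unfolding ideal_in_def
  proof (intro conjI ballI)
    show "0 \<in> ?M" using ideal_in_0[OF pow_ideal[of I "Suc a + b"]] by simp
  next
    fix p q assume "p \<in> ?M" "q \<in> ?M"
    then show "p + q \<in> ?M" using ideal_in_add[OF pow_ideal[of I "Suc a + b"]] by (simp add: distrib_right)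
  next
    fix c p assume "p \<in> ?M"
    then show "c * p \<in> ?M" using ideal_UNIV_mult[OF pow_ideal[of I "Suc a + b"]] by (simp add: mult.assoc)
  qed simp
  have "ideal_pow I (Suc a) \<subseteq> ?M"
    unfolding ideal_pow.simps ideal_mult_def
  proof (rule gen_in_min[OF M], rule subsetI)
    fix w assume "w \<in> {p * q |p q. p \<in> I \<and> q \<in> ideal_pow I a}"
    then obtain p q where w: "w = p * q" "p \<in> I" "q \<in> ideal_pow I a" by blast
    show "w \<in> ?M"
    proof (rule CollectI, rule ballI)
      fix v assume "v \<in> ideal_pow I b"
      then have "q * v \<in> ideal_pow I (a + b)" using Suc.IH w(3) by blast
      then have "p * (q * v) \<in> ideal_pow I (Suc (a + b))" using w(2) by (simp add: ideal_mult_prod)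
      then show "w * v \<in> ideal_pow I (Suc a + b)" using w(1) by (simp add: mult.assoc)
    qed
  qed
  then show ?case using Suc.prems by blast
qed

lemma pow_elem: "ideal I \<Longrightarrow> u \<in> I \<Longrightarrow> u ^ k \<in> ideal_pow I k"
proof (induction k)
  case 0 then show ?case by simp
next
  case (Suc k)
  have "u * u ^ k \<in> ideal_pow I (1 + k)"
    by (rule pow_mult) (use Suc pow1 in auto)
  then show ?case by simp
qed

lemma linB_0: "0 \<in> B \<Longrightarrow> 0 \<in> linB x K B"
  using linB_mem[where K=K and b="\<lambda>_. 0" and B=B and x=x] by simp

lemma linB_add:
  assumes "\<And>a b. a \<in> B \<Longrightarrow> b \<in> B \<Longrightarrow> a + b \<in> B" "u \<in> linB x K B" "v \<in> linB x K B"
  shows "u + v \<in> linB x K B"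
proof -
  obtain r where ra: "u = (\<Sum>l\<in>K. x l * r l)" "\<And>l. l \<in> K \<Longrightarrow> r l \<in> B" using assms(2) unfolding linB_def by blast
  obtain r' where rb: "v = (\<Sum>l\<in>K. x l * r' l)" "\<And>l. l \<in> K \<Longrightarrow> r' l \<in> B" using assms(3) unfolding linB_def by blast
  have "u + v = (\<Sum>l\<in>K. x l * (r l + r' l))" unfolding ra rb by (simp add: sum.distrib distrib_left)
  then show ?thesis using linB_mem[where K=K and b="\<lambda>l. r l + r' l" and B=B and x=x] ra(2) rb(2) assms(1) by simp
qed

lemma linB_sum:
  assumes "0 \<in> B" "\<And>a b. a \<in> B \<Longrightarrow> b \<in> B \<Longrightarrow> a + b \<in> B" "\<And>i. i \<in> A \<Longrightarrow> f i \<in> linB x K B"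
  shows "sum f A \<in> linB x K B"
  using assms(3)
  by (induction A rule: infinite_finite_induct) (auto intro: linB_0[OF assms(1)] linB_add[OF assms(2)])

lemma linB_Suc:
  "linB x {1..Suc t} B = {v + x (Suc t) * b | v b. v \<in> linB x {1..t} B \<and> b \<in> B}"
proof (intro set_eqI iffI)
  fix u assume "u \<in> linB x {1..Suc t} B"
  then obtain r where r: "u = (\<Sum>l\<in>{1..Suc t}. x l * r l)" "\<And>l. l \<in> {1..Suc t} \<Longrightarrow> r l \<in> B"
    unfolding linB_def by blast
  have "u = (\<Sum>l\<in>{1..t}. x l * r l) + x (Suc t) * r (Suc t)" unfolding r(1) by simp
  moreover have "(\<Sum>l\<in>{1..t}. x l * r l) \<in> linB x {1..t} B" by (rule linB_mem) (use r(2) in auto)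
  moreover have "r (Suc t) \<in> B" using r(2) by auto
  ultimately show "u \<in> {v + x (Suc t) * b | v b. v \<in> linB x {1..t} B \<and> b \<in> B}" by blast
next
  fix u assume "u \<in> {v + x (Suc t) * b | v b. v \<in> linB x {1..t} B \<and> b \<in> B}"
  then obtain v b where vb: "u = v + x (Suc t) * b" "v \<in> linB x {1..t} B" "b \<in> B" by blast
  obtain r where r: "v = (\<Sum>l\<in>{1..t}. x l * r l)" "\<And>l. l \<in> {1..t} \<Longrightarrow> r l \<in> B"
    using vb(2) unfolding linB_def by blast
  let ?r = "r(Suc t := b)"
  have "(\<Sum>l\<in>{1..t}. x l * ?r l) = v" unfolding r(1) by (rule sum.cong) auto
  then have "u = (\<Sum>l\<in>{1..Suc t}. x l * ?r l)" using vb(1) by simp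
  moreover have "\<And>l. l \<in> {1..Suc t} \<Longrightarrow> ?r l \<in> B" using r(2) vb(3) by auto
  ultimately show "u \<in> linB x {1..Suc t} B" using linB_mem[where K="{1..Suc t}" and b="?r" and B=B and x=x] by simp
qed

lemma lin_Suc:
  "lin x {1..Suc t} = {v + r * x (Suc t) | v r. v \<in> lin x {1..t}}"
proof (intro set_eqI iffI)
  fix u assume "u \<in> lin x {1..Suc t}"
  then obtain r where r: "u = (\<Sum>l\<in>{1..Suc t}. r l * x l)" by (rule lin_E)
  have "u = (\<Sum>l\<in>{1..t}. r l * x l) + r (Suc t) * x (Suc t)" unfolding r(1) by simp
  then show "u \<in> {v + r * x (Suc t) | v r. v \<in> lin x {1..t}}" using lin_mem by blast
next
  fix u assume "u \<in> {v + r * x (Suc t) | v r. v \<in> lin x {1..t}}"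
  then obtain v c where vb: "u = v + c * x (Suc t)" "v \<in> lin x {1..t}" by blast
  obtain r where r: "v = (\<Sum>l\<in>{1..t}. r l * x l)" using vb(2) by (rule lin_E)
  let ?r = "r(Suc t := c)"
  have "(\<Sum>l\<in>{1..t}. ?r l * x l) = v" unfolding r(1) by (rule sum.cong) auto
  then have "u = (\<Sum>l\<in>{1..Suc t}. ?r l * x l)" using vb(1) by simp
  then show "u \<in> lin x {1..Suc t}" using lin_mem[where K="{1..Suc t}" and r="?r" and x=x] by simp
qed

lemma Jseq_lin: "Jseq x k = lin x {1..k}"
  unfolding Jseq_def by (rule gen_lin) simp

lemma Jseq_ideal: "ideal (Jseq x k)"
  unfolding Jseq_def by (rule gen_ideal)

lemma Jseq_mono: "k \<le> k' \<Longrightarrow> Jseq x k \<subseteq> Jseq x k'"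
  unfolding Jseq_def
  by (rule gen_in_min[OF gen_ideal]) (use gen_in_sub[of "x ` {1..k'}" UNIV] in auto)

lemma Jseq_x: "l \<in> {1..k} \<Longrightarrow> x l \<in> Jseq x k"
  unfolding Jseq_def using gen_in_sub[of "x ` {1..k}" UNIV] by blast

lemma Jseq_0: "Jseq x 0 = {0}"
  unfolding Jseq_lin lin_def by simp

lemma JB_linB: "ideal B \<Longrightarrow> ideal_mult (Jseq x k) B = linB x {1..k} B"
  unfolding Jseq_def by (rule ideal_mult_linB) auto

locale rsetup =
  fixes x :: "nat \<Rightarrow> 'a::comm_ring_1" and y :: 'a and s :: nat and I :: "'a set"
  assumes I_gen: "I = gen (insert y (x ` {1..s}))"
begin

abbreviation "J \<equiv> Jseq x s"
abbreviation "z \<equiv> (\<lambda>i. if i = 0 then y else x i)"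

lemma I_ideal: "ideal I"
  unfolding I_gen by (rule gen_ideal)

lemma y_in: "y \<in> I"
  unfolding I_gen using gen_in_sub[of "insert y (x ` {1..s})" UNIV] by blast

lemma x_in: "l \<in> {1..s} \<Longrightarrow> x l \<in> I"
  unfolding I_gen using gen_in_sub[of "insert y (x ` {1..s})" UNIV] by blast

lemma z_in: "i \<in> {0..s} \<Longrightarrow> z i \<in> I"
  using y_in x_in by auto

lemma J_sub_I: "Jseq x k \<subseteq> I" if "k \<le> s"
  unfolding Jseq_def
  by (rule gen_in_min[OF I_ideal]) (use x_in that in auto)

lemma prod_in_pow:
  "finite K \<Longrightarrow> K \<subseteq> {0..s} \<Longrightarrow> (\<Prod>i\<in>K. z i ^ f i) \<in> ideal_pow I (\<Sum>i\<in>K. f i)"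
proof (induction K rule: finite_induct)
  case empty then show ?case by simp
next
  case (insert i K)
  have zi: "z i \<in> I" using insert.prems z_in[of i] by blast
  have a: "z i ^ f i \<in> ideal_pow I (f i)" by (rule pow_elem[OF I_ideal zi])
  have b: "(\<Prod>i\<in>K. z i ^ f i) \<in> ideal_pow I (\<Sum>i\<in>K. f i)" using insert.IH insert.prems by blast
  have "z i ^ f i * (\<Prod>i\<in>K. z i ^ f i) \<in> ideal_pow I (f i + (\<Sum>i\<in>K. f i))"
    by (rule pow_mult[OF I_ideal a b])
  then show ?case by (simp only: prod.insert[OF insert.hyps] sum.insert[OF insert.hyps])
qed

lemma ev_in_pow: "F \<in> Vdeg s n \<Longrightarrow> ev x y F \<in> ideal_pow I n"
proof -
  assume F: "F \<in> Vdeg s n"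
  have "ev x y F = (\<Sum>m\<in>Poly_Mapping.keys F. Poly_Mapping.lookup F m * mon z m)"
    by (simp add: ev_def evalg_def)
  also have "\<dots> \<in> ideal_pow I n"
  proof (rule ideal_in_sum[OF pow_ideal], rule ideal_UNIV_mult[OF pow_ideal])
    fix m assume m: "m \<in> Poly_Mapping.keys F"
    then have "Poly_Mapping.keys m \<subseteq> {0..s}" "mdeg m = n"
      using F by (auto simp: Vdeg_def Vset_def homogeneous_def)
    then show "mon z m \<in> ideal_pow I n"
      using prod_in_pow[of "Poly_Mapping.keys m" "Poly_Mapping.lookup m"] by (simp add: mon_def mdeg_def)
  qed
  finally show ?thesis .
qed

definition L :: "nat \<Rightarrow> 'a set" where "L n = {ev x y F | F. F \<in> Vdeg s n}"

lemma L_ideal: "ideal (L n)"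
  unfolding ideal_in_def
proof (intro conjI ballI)
  show "0 \<in> L n" unfolding L_def by (rule CollectI, rule exI[of _ 0]) (simp add: ev_def)
next
  fix a b assume "a \<in> L n" "b \<in> L n"
  then obtain F G where FG: "a = ev x y F" "F \<in> Vdeg s n" "b = ev x y G" "G \<in> Vdeg s n" unfolding L_def by blast
  show "a + b \<in> L n" unfolding L_def
    by (rule CollectI, rule exI[of _ "F + G"]) (simp add: FG ev_add Vdeg_add)
next
  fix c a assume "a \<in> L n"
  then obtain F where F: "a = ev x y F" "F \<in> Vdeg s n" unfolding L_def by blast
  have "c * a = ev x y (Poly_Mapping.single 0 c * F)" using F by (simp add: ev_mult ev_const)
  moreover have "Poly_Mapping.single 0 c * F \<in> Vdeg s n" using Vdeg_mult[OF const_Vdeg F(2)] by simp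
  ultimately show "c * a \<in> L n" unfolding L_def by blast
qed simp

lemma lift: assumes "c \<in> ideal_pow I n" shows "\<exists>C\<in>Vdeg s n. ev x y C = c"
proof -
  have "ideal_pow I n \<subseteq> L n"
  proof (induction n)
    case 0
    show ?case unfolding L_def
    proof
      fix c :: 'a
      show "c \<in> {ev x y F |F. F \<in> Vdeg s 0}"
        by (rule CollectI, rule exI[of _ "Poly_Mapping.single 0 c"]) (simp add: ev_const const_Vdeg)
    qed
  next
    case (Suc n)
    have I1: "I \<subseteq> L 1"
      unfolding I_gen
    proof (rule gen_in_min[OF L_ideal], rule subsetI)
      fix a assume "a \<in> insert y (x ` {1..s})"
      then consider "a = ev x y (var 0)" | i where "i \<in> {1..s}" "a = ev x y (var i)"
        by (auto simp: ev_var)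
      then show "a \<in> L 1"
      proof cases
        case 1 then show ?thesis unfolding L_def using var_Vdeg[of 0 s] by blast
      next
        case (2 i) then show ?thesis unfolding L_def using var_Vdeg[of i s] by auto
      qed
    qed
    show ?case
      unfolding ideal_pow.simps ideal_mult_def
    proof (rule gen_in_min[OF L_ideal], rule subsetI)
      fix w assume "w \<in> {a * b |a b. a \<in> I \<and> b \<in> ideal_pow I n}"
      then obtain a b where w: "w = a * b" "a \<in> I" "b \<in> ideal_pow I n" by blast
      obtain A where A: "A \<in> Vdeg s 1" "a = ev x y A" using I1 w(2) unfolding L_def by blast
      obtain B where B: "B \<in> Vdeg s n" "b = ev x y B" using Suc.IH w(3) unfolding L_def by blast
      have "A * B \<in> Vdeg s (Suc n)" using Vdeg_mult[OF A(1) B(1)] by simp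
      moreover have "w = ev x y (A * B)" using w A B by (simp add: ev_mult)
      ultimately show "w \<in> L (Suc n)" unfolding L_def by blast
    qed
  qed
  with assms have "c \<in> L n" by blast
  then show "\<exists>C\<in>Vdeg s n. ev x y C = c" unfolding L_def by blast
qed

lemma mono_decomp:
  fixes c :: 'a
  assumes km: "Poly_Mapping.keys m \<subseteq> {0..s}" and dm: "mdeg m = n" and ne: "m \<noteq> Poly_Mapping.single 0 n"
  shows "Poly_Mapping.single m c \<in> linB var {1..s} (Vdeg s (n - 1))"
proof -
  have "\<exists>l\<in>Poly_Mapping.keys m. l \<noteq> 0"
  proof (rule ccontr)
    assume "\<not> (\<exists>l\<in>Poly_Mapping.keys m. l \<noteq> 0)"
    then have k0: "\<And>k. k \<noteq> 0 \<Longrightarrow> Poly_Mapping.lookup m k = 0" by (metis in_keys_iff)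
    have "m = Poly_Mapping.single 0 (Poly_Mapping.lookup m 0)"
      by (rule poly_mapping_eqI) (auto simp: lookup_single when_def k0)
    moreover then have "mdeg m = Poly_Mapping.lookup m 0" by (metis mdeg_single)
    ultimately show False using ne dm by simp
  qed
  then obtain l where l: "l \<in> Poly_Mapping.keys m" "l \<noteq> 0" by blast
  then have l1: "l \<in> {1..s}" using km by auto
  have ml: "Poly_Mapping.lookup m l \<ge> 1" using l(1) by (simp add: in_keys_iff)
  define m' where "m' = m - Poly_Mapping.single l 1"
  have mm': "m = Poly_Mapping.single l 1 + m'"
    unfolding m'_def by (rule poly_mapping_eqI) (use ml in \<open>auto simp: lookup_add lookup_minus lookup_single when_def\<close>)
  have km': "Poly_Mapping.keys m' \<subseteq> Poly_Mapping.keys m"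
    unfolding m'_def by (auto simp: in_keys_iff lookup_minus)
  have dm': "mdeg m' = n - 1" using dm mm' by (simp add: mdeg_add)
  have m'V: "Poly_Mapping.single m' c \<in> Vdeg s (n - 1)"
    by (rule Vdeg_single) (use km km' dm' in auto)
  have eq: "Poly_Mapping.single m c = var l * Poly_Mapping.single m' c"
    by (simp add: var_eq mult_single mm')
  define B where "B = (\<lambda>j. if j = l then Poly_Mapping.single m' c else (0::'a mpoly))"
  have "(\<Sum>j\<in>{1..s}. var j * B j) = (\<Sum>j\<in>{1..s}. if j = l then var l * Poly_Mapping.single m' c else 0)"
    by (rule sum.cong) (auto simp: B_def)
  also have "\<dots> = Poly_Mapping.single m c" using l1 eq by simp
  finally have "Poly_Mapping.single m c = (\<Sum>j\<in>{1..s}. var j * B j)" by simp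
  moreover have "\<And>j. j \<in> {1..s} \<Longrightarrow> B j \<in> Vdeg s (n - 1)" using m'V by (simp add: B_def)
  ultimately show ?thesis using linB_mem[where K="{1..s}" and b=B and B="Vdeg s (n - 1)" and x=var] by simp
qed

lemma decomp:
  fixes F :: "'a mpoly"
  assumes F: "F \<in> Vdeg s n"
  shows "\<exists>B. (\<forall>l\<in>{1..s}. B l \<in> Vdeg s (n - 1)) \<and>
    F = Poly_Mapping.single 0 (Poly_Mapping.lookup F (Poly_Mapping.single 0 n)) * Yv ^ n + (\<Sum>l\<in>{1..s}. var l * B l)"
proof -
  let ?e = "Poly_Mapping.single 0 n :: nat \<Rightarrow>\<^sub>0 nat"
  let ?c = "Poly_Mapping.lookup F ?e"
  have split: "F = Poly_Mapping.single ?e ?c + (\<Sum>m\<in>Poly_Mapping.keys F - {?e}. Poly_Mapping.single m (Poly_Mapping.lookup F m))"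
  proof (cases "?e \<in> Poly_Mapping.keys F")
    case True
    show ?thesis
      by (subst pm_expand) (simp add: sum.remove[OF finite_keys True])
  next
    case False
    then have "?c = 0" by (simp add: in_keys_iff)
    then show ?thesis using False by (subst pm_expand) simp
  qed
  have "(\<Sum>m\<in>Poly_Mapping.keys F - {?e}. Poly_Mapping.single m (Poly_Mapping.lookup F m)) \<in> linB var {1..s} (Vdeg s (n - 1))"
  proof (rule linB_sum)
    fix m assume "m \<in> Poly_Mapping.keys F - {?e}"
    then show "Poly_Mapping.single m (Poly_Mapping.lookup F m) \<in> linB var {1..s} (Vdeg s (n - 1))"
      using F by (intro mono_decomp) (auto simp: Vdeg_def Vset_def homogeneous_def)
  qed (auto intro: Vdeg_add)
  then obtain B where B: "(\<Sum>m\<in>Poly_Mapping.keys F - {?e}. Poly_Mapping.single m (Poly_Mapping.lookup F m)) = (\<Sum>l\<in>{1..s}. var l * B l)"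
      "\<forall>l\<in>{1..s}. B l \<in> Vdeg s (n - 1)"
    unfolding linB_def by blast
  have "Poly_Mapping.single ?e ?c = Poly_Mapping.single 0 ?c * Yv ^ n"
    by (simp add: Yv_pow mult_single)
  then show ?thesis using split B by metis
qed

end

context rsetup
begin

lemma ev_lin:
  assumes "\<And>l. l \<in> K \<Longrightarrow> l \<noteq> 0"
  shows "ev x y (\<Sum>l\<in>K. var l * B l) = (\<Sum>l\<in>K. x l * ev x y (B l))"
proof -
  have "\<forall>l\<in>K. ev x y (var l * B l) = x l * ev x y (B l)" using assms by (auto simp: ev_mult ev_var)
  then show ?thesis by (simp add: ev_sum)
qed

lemma JI_lin: "ideal_mult (Jseq x k) (ideal_pow I m) = linB x {1..k} (ideal_pow I m)"
  by (rule JB_linB[OF pow_ideal])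

lemma linB_sub_J: "linB x {1..k} B \<subseteq> Jseq x k"
proof
  fix u assume "u \<in> linB x {1..k} B"
  then obtain b where b: "u = (\<Sum>l\<in>{1..k}. x l * b l)" unfolding linB_def by blast
  have "(\<Sum>l\<in>{1..k}. x l * b l) \<in> Jseq x k"
    by (rule ideal_in_sum[OF Jseq_ideal], rule ideal_UNIV_mult2[OF Jseq_ideal], rule Jseq_x)
  then show "u \<in> Jseq x k" using b by simp
qed

lemma stepk:
  assumes n2: "2 \<le> n"
    and hyp: "\<And>k a. k \<in> {1..s} \<Longrightarrow> a \<in> ideal_pow I (n - 1) \<Longrightarrow> x k * a \<in> Jseq x (k - 1) \<Longrightarrow>
                 a \<in> ideal_mult (Jseq x (k - 1)) (ideal_pow I (n - 2))"
    and T: "ideal_in (Vset s) T" "Qdeg x y s (n - 1) \<subseteq> T"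
  shows "k \<le> s \<Longrightarrow> (\<forall>l\<in>{1..k}. B l \<in> Vdeg s (n - 1)) \<Longrightarrow> ev x y (\<Sum>l\<in>{1..k}. var l * B l) = 0 \<Longrightarrow>
         (\<Sum>l\<in>{1..k}. var l * B l) \<in> T"
proof (induction k arbitrary: B)
  case 0
  then show ?case using ideal_in_0[OF T(1)] by simp
next
  case (Suc k)
  let ?F = "\<Sum>l\<in>{1..Suc k}. var l * B l"
  define a where "a = ev x y (B (Suc k))"
  have Bk: "B (Suc k) \<in> Vdeg s (n - 1)" using Suc.prems by auto
  have a_in: "a \<in> ideal_pow I (n - 1)" unfolding a_def by (rule ev_in_pow[OF Bk])
  have evF: "ev x y ?F = (\<Sum>l\<in>{1..k}. x l * ev x y (B l)) + x (Suc k) * a"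
    unfolding a_def by (subst ev_lin) auto
  have "(\<Sum>l\<in>{1..k}. x l * ev x y (B l)) + x (Suc k) * a = 0"
    using evF Suc.prems(3) by simp
  then have "- (\<Sum>l\<in>{1..k}. x l * ev x y (B l)) = x (Suc k) * a"
    by (subst neg_eq_iff_add_eq_0)
  then have "x (Suc k) * a = - (\<Sum>l\<in>{1..k}. x l * ev x y (B l))" by (rule sym)
  moreover have "(\<Sum>l\<in>{1..k}. x l * ev x y (B l)) \<in> Jseq x k"
    by (rule subsetD[OF linB_sub_J[where B=UNIV]], rule linB_mem) simp
  ultimately have "x (Suc k) * a \<in> Jseq x k"
    using ideal_UNIV_uminus[OF Jseq_ideal] by simp
  then have xa: "x (Suc k) * a \<in> Jseq x (Suc k - 1)" by simp
  have k1: "Suc k \<in> {1..s}" using Suc.prems(1) by simp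
  have "a \<in> ideal_mult (Jseq x (Suc k - 1)) (ideal_pow I (n - 2))"
    by (rule hyp[OF k1 a_in xa])
  then have "a \<in> ideal_mult (Jseq x k) (ideal_pow I (n - 2))" by simp
  then have "a \<in> linB x {1..k} (ideal_pow I (n - 2))"
    unfolding JI_lin .
  then obtain c where c: "a = (\<Sum>l\<in>{1..k}. x l * c l)" "\<And>l. l \<in> {1..k} \<Longrightarrow> c l \<in> ideal_pow I (n - 2)"
    unfolding linB_def by blast
  have "\<forall>l\<in>{1..k}. \<exists>C. C \<in> Vdeg s (n - 2) \<and> ev x y C = c l"
  proof
    fix l assume l: "l \<in> {1..k}"
    show "\<exists>C. C \<in> Vdeg s (n - 2) \<and> ev x y C = c l" using lift[OF c(2)[OF l]] by blast
  qed
  from bchoice[OF this] obtain C where C0: "\<forall>l\<in>{1..k}. C l \<in> Vdeg s (n - 2) \<and> ev x y (C l) = c l"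
    by blast
  have C: "\<And>l. l \<in> {1..k} \<Longrightarrow> C l \<in> Vdeg s (n - 2)" "\<And>l. l \<in> {1..k} \<Longrightarrow> ev x y (C l) = c l"
    using C0 by auto
  have n21: "1 + (n - 2) = n - 1" using n2 by simp
  have vC: "\<And>l. l \<in> {1..k} \<Longrightarrow> var l * C l \<in> Vdeg s (n - 1)"
  proof -
    fix l assume l: "l \<in> {1..k}"
    have "l \<le> s" using l Suc.prems(1) by simp
    from Vdeg_mult[OF var_Vdeg[OF this] C(1)[OF l]] show "var l * C l \<in> Vdeg s (n - 1)" using n21 by simp
  qed
  define A' where "A' = B (Suc k) - (\<Sum>l\<in>{1..k}. var l * C l)"
  have A'V: "A' \<in> Vdeg s (n - 1)"
    unfolding A'_def by (rule Vdeg_diff[OF Bk], rule Vdeg_sum) (use vC in auto)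
  have "ev x y (\<Sum>l\<in>{1..k}. var l * C l) = (\<Sum>l\<in>{1..k}. x l * ev x y (C l))"
    by (rule ev_lin) auto
  also have "\<dots> = (\<Sum>l\<in>{1..k}. x l * c l)" by (rule sum.cong) (simp_all add: C(2))
  finally have "ev x y A' = a - (\<Sum>l\<in>{1..k}. x l * c l)"
    unfolding A'_def a_def by (simp add: ev_diff)
  then have evA': "ev x y A' = 0" using c(1) by simp
  then have A'T: "A' \<in> T" using T(2) A'V by (auto simp: Qdeg_iff)
  have vs: "var (Suc k) \<in> Vset s" using var_Vdeg[of "Suc k" s] Suc.prems(1) Vdeg_Vset by auto
  have t1: "var (Suc k) * A' \<in> T" by (rule ideal_in_mult[OF T(1) vs A'T])
  define B' where "B' = (\<lambda>l. B l + var (Suc k) * C l)"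
  have B'V: "\<forall>l\<in>{1..k}. B' l \<in> Vdeg s (n - 1)"
  proof
    fix l assume l: "l \<in> {1..k}"
    have "var (Suc k) * C l \<in> Vdeg s (n - 1)"
      using Vdeg_mult[OF var_Vdeg[of "Suc k" s] C(1)[OF l]] Suc.prems(1) n21 by simp
    then show "B' l \<in> Vdeg s (n - 1)" unfolding B'_def using Suc.prems(2) l by (auto intro: Vdeg_add)
  qed
  have Feq: "?F = var (Suc k) * A' + (\<Sum>l\<in>{1..k}. var l * B' l)"
    unfolding A'_def B'_def by (simp add: sum.distrib distrib_left sum_distrib_left algebra_simps)
  have "ev x y (\<Sum>l\<in>{1..k}. var l * B' l) = 0"
    using Feq Suc.prems(3) evA' by (simp add: ev_add ev_mult)
  then have t2: "(\<Sum>l\<in>{1..k}. var l * B' l) \<in> T"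
    using Suc.IH[of B'] Suc.prems(1) B'V by simp
  show ?case unfolding Feq by (rule ideal_in_add[OF T(1) t1 t2])
qed

end

locale rsetup2 = rsetup x y s I for x :: "nat \<Rightarrow> 'a::comm_ring_1" and y s I +
  fixes r :: nat
  assumes red: "is_reduction (Jseq x s) I" and r_def: "r = red_num (Jseq x s) I"
begin

lemma red_r: "ideal_pow I (Suc r) = ideal_mult J (ideal_pow I r)"
proof -
  from red obtain m where "ideal_pow I (Suc m) = ideal_mult J (ideal_pow I m)"
    unfolding is_reduction_def by blast
  then show ?thesis unfolding r_def red_num_def by (rule LeastI)
qed

lemma r_least: "ideal_pow I (Suc k) = ideal_mult J (ideal_pow I k) \<Longrightarrow> r \<le> k"
  unfolding r_def red_num_def by (rule Least_le)

lemma red_ge: "r \<le> m \<Longrightarrow> ideal_pow I (Suc m) = ideal_mult J (ideal_pow I m)"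
proof (induction m rule: dec_induct)
  case base
  then show ?case by (rule red_r)
next
  case (step m)
  show ?case
  proof
    show "ideal_pow I (Suc (Suc m)) \<subseteq> ideal_mult J (ideal_pow I (Suc m))"
      unfolding JI_lin ideal_pow.simps(2)[of I "Suc m"] ideal_mult_def[of I]
    proof (rule gen_in_min[OF linB_ideal[OF pow_ideal]], rule subsetI)
      fix w assume "w \<in> {p * q |p q. p \<in> I \<and> q \<in> ideal_pow I (Suc m)}"
      then obtain p q where w: "w = p * q" "p \<in> I" "q \<in> ideal_pow I (Suc m)" by blast
      have "q \<in> linB x {1..s} (ideal_pow I m)" using w(3) step.IH JI_lin by simp
      then obtain b where b: "q = (\<Sum>l\<in>{1..s}. x l * b l)" "\<And>l. l \<in> {1..s} \<Longrightarrow> b l \<in> ideal_pow I m"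
        unfolding linB_def by blast
      have "w = (\<Sum>l\<in>{1..s}. x l * (p * b l))" unfolding w(1) b(1)
        by (simp add: sum_distrib_left mult.left_commute)
      moreover have "\<And>l. l \<in> {1..s} \<Longrightarrow> p * b l \<in> ideal_pow I (Suc m)"
        using w(2) b(2) by (simp add: ideal_mult_prod)
      ultimately show "w \<in> linB x {1..s} (ideal_pow I (Suc m))"
        using linB_mem[where K="{1..s}" and b="\<lambda>l. p * b l" and B="ideal_pow I (Suc m)" and x=x] by simp
    qed
    show "ideal_mult J (ideal_pow I (Suc m)) \<subseteq> ideal_pow I (Suc (Suc m))"
    proof
      fix u assume "u \<in> ideal_mult J (ideal_pow I (Suc m))"
      then have "u \<in> linB x {1..s} (ideal_pow I (Suc m))" using JI_lin[of s "Suc m"] by blast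
      then obtain b where b: "u = (\<Sum>l\<in>{1..s}. x l * b l)" "\<And>l. l \<in> {1..s} \<Longrightarrow> b l \<in> ideal_pow I (Suc m)"
        unfolding linB_def by blast
      have "(\<Sum>l\<in>{1..s}. x l * b l) \<in> ideal_mult I (ideal_pow I (Suc m))"
        by (rule ideal_in_sum[OF ideal_mult_ideal], rule ideal_mult_prod[OF x_in b(2)])
      then show "u \<in> ideal_pow I (Suc (Suc m))" using b(1) by simp
    qed
  qed
qed

lemma JI_sub: "k \<le> s \<Longrightarrow> ideal_mult (Jseq x k) (ideal_pow I m) \<subseteq> ideal_pow I (Suc m)"
proof
  fix u assume k: "k \<le> s" and "u \<in> ideal_mult (Jseq x k) (ideal_pow I m)"
  then have "u \<in> linB x {1..k} (ideal_pow I m)" using JI_lin by simp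
  then obtain b where b: "u = (\<Sum>l\<in>{1..k}. x l * b l)" "\<And>l. l \<in> {1..k} \<Longrightarrow> b l \<in> ideal_pow I m"
    unfolding linB_def by blast
  have "(\<Sum>l\<in>{1..k}. x l * b l) \<in> ideal_mult I (ideal_pow I m)"
    by (rule ideal_in_sum[OF ideal_mult_ideal], rule ideal_mult_prod[OF x_in b(2)]) (use k in auto)
  then show "u \<in> ideal_pow I (Suc m)" using b(1) by simp
qed

lemma pow_sub_J: "r < m \<Longrightarrow> ideal_pow I m \<subseteq> J"
proof -
  assume "r < m"
  then obtain m' where m: "m = Suc m'" "r \<le> m'" by (cases m) auto
  then have "ideal_pow I m = linB x {1..s} (ideal_pow I m')" using red_ge JI_lin by simp
  then show ?thesis using linB_sub_J by simp
qed

end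

context rsetup2
begin

lemma dseq_lemma:
  assumes ds: "d_sequence x s" and k: "k \<in> {1..s}" and a: "a \<in> J" and xa: "x k * a \<in> Jseq x (k - 1)"
  shows "a \<in> Jseq x (k - 1)"
proof -
  have col: "a * x j \<in> Jseq x (k - 1)" if j: "j \<in> {k..s}" for j
  proof -
    have H: "\<forall>i j. i \<le> s - 1 \<and> i + 1 \<le> j \<and> j \<le> s \<longrightarrow>
       colon (Jseq x i) (x (i+1) * x j) = colon (Jseq x i) (x j)" using ds unfolding d_sequence_def .
    have "colon (Jseq x (k - 1)) (x (k - 1 + 1) * x j) = colon (Jseq x (k - 1)) (x j)"
      by (rule H[rule_format]) (use j k in auto)
    moreover have "a * (x (k - 1 + 1) * x j) \<in> Jseq x (k - 1)"
    proof -
      have "a * (x (k - 1 + 1) * x j) = (x k * a) * x j" using k by (simp add: ac_simps)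
      then show ?thesis using ideal_UNIV_mult2[OF Jseq_ideal xa] by simp
    qed
    ultimately show ?thesis unfolding colon_def by auto
  qed
  have main: "\<And>t. s - t = d \<Longrightarrow> k - 1 \<le> t \<Longrightarrow> t \<le> s \<Longrightarrow> a \<in> Jseq x t" for d
  proof (induction d)
    case 0
    then have "t = s" by simp
    then show ?case using a by simp
  next
    case (Suc d t)
    then have ts: "t < s" "s - Suc t = d" by auto
    have "a \<in> Jseq x (Suc t)" using Suc.IH[of "Suc t"] ts Suc.prems by simp
    then have "a \<in> lin x {1..Suc t}" by (simp add: Jseq_lin)
    then obtain v w where vw: "a = v + w * x (Suc t)" "v \<in> lin x {1..t}" unfolding lin_Suc by blast
    have v: "v \<in> Jseq x t" using vw(2) by (simp add: Jseq_lin)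
    have "a * x (Suc t) \<in> Jseq x (k - 1)" using col[of "Suc t"] Suc.prems ts by simp
    then have ax: "a * x (Suc t) \<in> Jseq x t" using Jseq_mono[of "k - 1" t x] Suc.prems by auto
    have vx: "v * x (Suc t) \<in> Jseq x t" by (rule ideal_UNIV_mult2[OF Jseq_ideal v])
    have "w * (x (t + 1) * x (Suc t)) = a * x (Suc t) - v * x (Suc t)"
      using vw(1) by (simp add: algebra_simps)
    then have "w \<in> colon (Jseq x t) (x (t + 1) * x (Suc t))"
      unfolding colon_def using ideal_UNIV_diff[OF Jseq_ideal ax vx] by (simp add: ac_simps)
    moreover have "colon (Jseq x t) (x (t + 1) * x (Suc t)) = colon (Jseq x t) (x (Suc t))"
    proof -
      have H: "\<forall>i j. i \<le> s - 1 \<and> i + 1 \<le> j \<and> j \<le> s \<longrightarrow>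
         colon (Jseq x i) (x (i+1) * x j) = colon (Jseq x i) (x j)" using ds unfolding d_sequence_def .
      show ?thesis by (rule H[rule_format]) (use ts in auto)
    qed
    ultimately have "w * x (Suc t) \<in> Jseq x t" unfolding colon_def by auto
    then show ?case using vw(1) v ideal_in_add[OF Jseq_ideal] by simp
  qed
  show ?thesis by (rule main[OF refl]) (use k in auto)
qed

lemma Cm:
  assumes ds: "d_sequence x s"
    and b: "\<forall>i\<in>{1..s-1}. Jseq x i \<inter> ideal_pow I (r + 1) = ideal_mult (Jseq x i) (ideal_pow I r)"
    and m: "Suc r \<le> m"
  shows "\<forall>i\<le>s. Jseq x i \<inter> ideal_pow I m \<subseteq> ideal_mult (Jseq x i) (ideal_pow I (m - 1))"
  using m
proof (induction m rule: dec_induct)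
  case base
  show ?case
  proof (intro allI impI)
    fix i assume i: "i \<le> s"
    consider "i = 0" | "i = s" | "i \<in> {1..s-1}" using i by fastforce
    then show "Jseq x i \<inter> ideal_pow I (Suc r) \<subseteq> ideal_mult (Jseq x i) (ideal_pow I (Suc r - 1))"
    proof cases
      case 1 then show ?thesis using ideal_in_0[OF ideal_mult_ideal] by (auto simp: Jseq_0)
    next
      case 2 then show ?thesis using red_r by auto
    next
      case 3 then show ?thesis using b by auto
    qed
  qed
next
  case (step m)
  have rm: "r < m" using step.hyps by simp
  show ?case
  proof (intro allI impI subsetI)
    fix i u assume i: "i \<le> s" and u: "u \<in> Jseq x i \<inter> ideal_pow I (Suc m)"
    have main: "\<And>t. s - t = d \<Longrightarrow> i \<le> t \<Longrightarrow> t \<le> s \<Longrightarrow> u \<in> linB x {1..t} (ideal_pow I m)" for d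
    proof (induction d)
      case 0
      then have "t = s" by simp
      moreover have "u \<in> ideal_mult J (ideal_pow I m)" using u red_ge[of m] rm by auto
      ultimately show ?case using JI_lin by simp
    next
      case (Suc d t)
      then have ts: "t < s" "s - Suc t = d" by auto
      have "u \<in> linB x {1..Suc t} (ideal_pow I m)" using Suc.IH[of "Suc t"] ts Suc.prems by simp
      then obtain v b where vb: "u = v + x (Suc t) * b" "v \<in> linB x {1..t} (ideal_pow I m)" "b \<in> ideal_pow I m"
        unfolding linB_Suc by blast
      have vJ: "v \<in> Jseq x t" using vb(2) linB_sub_J by blast
      have uJ: "u \<in> Jseq x t" using u Jseq_mono[of i t x] Suc.prems by auto
      have "x (Suc t) * b = u - v" using vb(1) by simp
      then have xb: "x (Suc t) * b \<in> Jseq x (Suc t - 1)" using ideal_UNIV_diff[OF Jseq_ideal uJ vJ] by simp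
      have bJ: "b \<in> J" using pow_sub_J[OF rm] vb(3) by blast
      have "b \<in> Jseq x (Suc t - 1)" by (rule dseq_lemma[OF ds _ bJ xb]) (use ts in auto)
      then have "b \<in> Jseq x t \<inter> ideal_pow I m" using vb(3) by simp
      moreover have "t \<le> s" using ts by simp
      ultimately have "b \<in> ideal_mult (Jseq x t) (ideal_pow I (m - 1))" using step.IH by blast
      then have "b \<in> linB x {1..t} (ideal_pow I (m - 1))" using JI_lin by simp
      then obtain c where c: "b = (\<Sum>l\<in>{1..t}. x l * c l)" "\<And>l. l \<in> {1..t} \<Longrightarrow> c l \<in> ideal_pow I (m - 1)"
        unfolding linB_def by blast
      have "x (Suc t) * b = (\<Sum>l\<in>{1..t}. x l * (x (Suc t) * c l))"
        unfolding c(1) by (simp add: sum_distrib_left mult.left_commute)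
      moreover have "\<And>l. l \<in> {1..t} \<Longrightarrow> x (Suc t) * c l \<in> ideal_pow I m"
      proof -
        fix l assume "l \<in> {1..t}"
        then have "x (Suc t) * c l \<in> ideal_mult I (ideal_pow I (m - 1))"
          using ideal_mult_prod[OF x_in c(2)] ts by auto
        moreover have "Suc (m - 1) = m" using rm by simp
        ultimately show "x (Suc t) * c l \<in> ideal_pow I m" by (metis ideal_pow.simps(2))
      qed
      ultimately have "x (Suc t) * b \<in> linB x {1..t} (ideal_pow I m)"
        using linB_mem[where K="{1..t}" and b="\<lambda>l. x (Suc t) * c l" and B="ideal_pow I m" and x=x] by simp
      then show ?case using vb linB_add[OF ideal_in_add[OF pow_ideal]] by simp
    qed
    have "u \<in> linB x {1..i} (ideal_pow I m)" by (rule main[OF refl]) (use i in auto)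
    then show "u \<in> ideal_mult (Jseq x i) (ideal_pow I (Suc m - 1))" using JI_lin by simp
  qed
qed

lemma hyp1:
  assumes ds: "d_sequence x s"
    and b: "\<forall>i\<in>{1..s-1}. Jseq x i \<inter> ideal_pow I (r + 1) = ideal_mult (Jseq x i) (ideal_pow I r)"
    and n: "r + 2 \<le> n" and k: "k \<in> {1..s}" and a: "a \<in> ideal_pow I (n - 1)" and xa: "x k * a \<in> Jseq x (k - 1)"
  shows "a \<in> ideal_mult (Jseq x (k - 1)) (ideal_pow I (n - 2))"
proof -
  have "r < n - 1" using n by simp
  then have "a \<in> J" using pow_sub_J a by blast
  then have "a \<in> Jseq x (k - 1)" by (rule dseq_lemma[OF ds k _ xa])
  moreover have "k - 1 \<le> s" using k by auto
  moreover have "Suc r \<le> n - 1" using n by simp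
  note C = Cm[OF ds b this]
  ultimately have "a \<in> ideal_mult (Jseq x (k - 1)) (ideal_pow I (n - 1 - 1))"
    using C a by blast
  moreover have "n - 1 - 1 = n - 2" by simp
  ultimately show ?thesis by simp
qed

lemma hyp2:
  assumes rs: "R_sequence x s"
    and d: "\<forall>i\<in>{1..s-1}. Jseq x i \<inter> ideal_pow I r = ideal_mult (Jseq x i) (ideal_pow I (r - 1))"
    and k: "k \<in> {1..s}" and a: "a \<in> ideal_pow I (r + 1 - 1)" and xa: "x k * a \<in> Jseq x (k - 1)"
  shows "a \<in> ideal_mult (Jseq x (k - 1)) (ideal_pow I (r + 1 - 2))"
proof -
  have "a * x k \<in> Jseq x (k - 1)" using xa by (simp add: mult.commute)
  then have aJ: "a \<in> Jseq x (k - 1)" using rs k unfolding R_sequence_def by blast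
  show ?thesis
  proof (cases "k = 1")
    case True
    then have "a = 0" using aJ by (simp add: Jseq_0)
    then show ?thesis using ideal_in_0[OF ideal_mult_ideal] by simp
  next
    case False
    then have "k - 1 \<in> {1..s-1}" using k by auto
    then show ?thesis using d aJ a by auto
  qed
qed

lemma G_exists:
  "\<exists>F. (\<forall>i\<in>{1..s}. F i \<in> Vdeg s r) \<and> Yv ^ (r + 1) - (\<Sum>i=1..s. Xv i * F i) \<in> Qdeg x y s (r + 1)"
proof -
  have "y ^ Suc r \<in> ideal_pow I (Suc r)" by (rule pow_elem[OF I_ideal y_in])
  then have "y ^ Suc r \<in> linB x {1..s} (ideal_pow I r)" using red_r JI_lin by simp
  then obtain f where f: "y ^ Suc r = (\<Sum>l\<in>{1..s}. x l * f l)" "\<And>l. l \<in> {1..s} \<Longrightarrow> f l \<in> ideal_pow I r"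
    unfolding linB_def by blast
  have "\<forall>l\<in>{1..s}. \<exists>C. C \<in> Vdeg s r \<and> ev x y C = f l"
  proof
    fix l assume l: "l \<in> {1..s}"
    show "\<exists>C. C \<in> Vdeg s r \<and> ev x y C = f l" using lift[OF f(2)[OF l]] by blast
  qed
  from bchoice[OF this] obtain F where F: "\<forall>l\<in>{1..s}. F l \<in> Vdeg s r \<and> ev x y (F l) = f l" by blast
  have vF: "\<And>l. l \<in> {1..s} \<Longrightarrow> var l * F l \<in> Vdeg s (r + 1)"
  proof -
    fix l assume l: "l \<in> {1..s}"
    from Vdeg_mult[OF var_Vdeg[of l s] conjunct1[OF F[rule_format, OF l]]] l show "var l * F l \<in> Vdeg s (r + 1)" by simp
  qed
  have GV: "Yv ^ (r + 1) - (\<Sum>i=1..s. Xv i * F i) \<in> Vdeg s (r + 1)"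
    by (rule Vdeg_diff[OF Yv_pow_Vdeg], rule Vdeg_sum) (use vF in auto)
  have "ev x y (\<Sum>i=1..s. Xv i * F i) = (\<Sum>l\<in>{1..s}. x l * ev x y (F l))" by (rule ev_lin) auto
  also have "\<dots> = y ^ Suc r" unfolding f(1) by (rule sum.cong) (use F in auto)
  moreover have "ev x y (Yv ^ (r + 1)) = y ^ Suc r" unfolding ev_pow ev_var by simp
  ultimately have "ev x y (Yv ^ (r + 1) - (\<Sum>i=1..s. Xv i * F i)) = 0" by (simp only: ev_diff) simp
  then show ?thesis using GV F by (auto simp: Qdeg_iff)
qed

lemma Qupto_ideal: "ideal_in (Vset s) (Qupto x y s N)"
  unfolding Qupto_def by (rule gen_in_ideal[OF subr_Vset]) (auto simp: Qdeg_def Qker_def)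

lemma Qdeg_Qupto: "k \<le> N \<Longrightarrow> Qdeg x y s k \<subseteq> Qupto x y s N"
  unfolding Qupto_def using gen_in_sub[of "\<Union>k\<in>{..N}. Qdeg x y s k" "Vset s"] by auto

lemma Qupto_mono: assumes "N \<le> N'" shows "Qupto x y s N \<subseteq> Qupto x y s N'"
  unfolding Qupto_def[of x y s N]
  by (rule gen_in_min[OF Qupto_ideal], rule UN_least, rule Qdeg_Qupto) (use assms in auto)

lemma Qker_ideal: "ideal_in (Vset s) (Qker x y s)"
  unfolding ideal_in_def Qker_def
  by (auto simp: rees_eq const_hom.evalg_add const_hom.evalg_mult intro: Vset_add Vset_mult)

lemma Qupto_Qker: "Qupto x y s N \<subseteq> Qker x y s"
  unfolding Qupto_def by (rule gen_in_min[OF Qker_ideal]) (auto simp: Qdeg_def)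

lemma Qker_from_deg:
  assumes "\<And>n. Qdeg x y s n \<subseteq> T" "ideal_in (Vset s) T"
  shows "Qker x y s \<subseteq> T"
proof
  fix F assume F: "F \<in> Qker x y s"
  then have FV: "F \<in> Vset s" and rF: "rees_map x y F = 0" by (auto simp: Qker_def)
  have "(\<Sum>n\<in>mdeg ` Poly_Mapping.keys F. hc n F) \<in> T"
  proof (rule ideal_in_sum[OF assms(2)])
    fix n
    have "hc n F \<in> Qdeg x y s n" using hc_Vdeg[OF FV] rees_zero_hc[OF rF] by (simp add: Qdeg_iff)
    then show "hc n F \<in> T" using assms(1) by blast
  qed
  then show "F \<in> T" using hc_decomp[of F] by simp
qed

lemma part1:
  assumes ds: "d_sequence x s"
    and b: "\<forall>i\<in>{1..s-1}. Jseq x i \<inter> ideal_pow I (r + 1) = ideal_mult (Jseq x i) (ideal_pow I r)"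
  shows "Qdeg x y s n \<subseteq> Qupto x y s (r + 1)"
proof (induction n rule: less_induct)
  case (less n)
  show ?case
  proof (cases "n \<le> r + 1")
    case True
    then show ?thesis by (rule Qdeg_Qupto)
  next
    case False
    then have n: "r + 2 \<le> n" by simp
    obtain Fs where Fs: "\<forall>i\<in>{1..s}. Fs i \<in> Vdeg s r" and GQ: "Yv ^ (r + 1) - (\<Sum>i=1..s. Xv i * Fs i) \<in> Qdeg x y s (r + 1)"
      using G_exists by blast
    define G where "G = Yv ^ (r + 1) - (\<Sum>i=1..s. Xv i * Fs i)"
    have GQ': "G \<in> Qupto x y s (r + 1)" using GQ Qdeg_Qupto[of "r + 1" "r + 1"] unfolding G_def by blast
    show ?thesis
    proof
      fix F assume FQ: "F \<in> Qdeg x y s n"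
      then have FV: "F \<in> Vdeg s n" and evF: "ev x y F = 0" by (auto simp: Qdeg_iff)
      obtain B where B: "\<forall>l\<in>{1..s}. B l \<in> Vdeg s (n - 1)"
        and Feq0: "F = Poly_Mapping.single 0 (Poly_Mapping.lookup F (Poly_Mapping.single 0 n)) * Yv ^ n + (\<Sum>l\<in>{1..s}. var l * B l)"
        using decomp[OF FV] by blast
      define P where "P = Poly_Mapping.single 0 (Poly_Mapping.lookup F (Poly_Mapping.single 0 n)) * Yv ^ (n - (r + 1))"
      have PV: "P \<in> Vdeg s (n - (r + 1))" unfolding P_def using Vdeg_mult[OF const_Vdeg Yv_pow_Vdeg] by simp
      have Yn: "(Yv::'a mpoly) ^ n = Yv ^ (n - (r + 1)) * Yv ^ (r + 1)"
        by (subst power_add[symmetric]) (use n in simp)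
      define B' where "B' = (\<lambda>l. B l + P * Fs l)"
      define S where "S = (\<Sum>i=1..s. Xv i * Fs i)"
      have e1: "P * S = (\<Sum>l\<in>{1..s}. var l * (P * Fs l))"
        unfolding S_def by (simp add: sum_distrib_left mult.left_commute)
      have e2: "(\<Sum>l\<in>{1..s}. var l * B' l) = (\<Sum>l\<in>{1..s}. var l * B l) + (\<Sum>l\<in>{1..s}. var l * (P * Fs l))"
        unfolding B'_def by (simp add: distrib_left sum.distrib)
      have e3: "Poly_Mapping.single 0 (Poly_Mapping.lookup F (Poly_Mapping.single 0 n)) * Yv ^ n = P * Yv ^ (r + 1)"
        unfolding P_def Yn by (simp only: mult.assoc)
      have GS: "Yv ^ (r + 1) = G + S" unfolding G_def S_def by simp
      have "F = P * (G + S) + (\<Sum>l\<in>{1..s}. var l * B l)"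
        by (subst Feq0) (simp only: e3 GS)
      also have "\<dots> = P * G + (P * S + (\<Sum>l\<in>{1..s}. var l * B l))"
        by (simp only: distrib_left add.assoc)
      also have "\<dots> = P * G + (\<Sum>l\<in>{1..s}. var l * B' l)"
        by (simp only: e1 e2 add.commute)
      finally have Feq: "F = P * G + (\<Sum>l\<in>{1..s}. var l * B' l)" .
      have B'V: "\<forall>l\<in>{1..s}. B' l \<in> Vdeg s (n - 1)"
      proof
        fix l assume l: "l \<in> {1..s}"
        have "P * Fs l \<in> Vdeg s (n - (r + 1) + r)" by (rule Vdeg_mult[OF PV]) (use Fs l in auto)
        moreover have "n - (r + 1) + r = n - 1" using n by simp
        ultimately show "B' l \<in> Vdeg s (n - 1)" unfolding B'_def using B l by (auto intro: Vdeg_add)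
      qed
      have evG: "ev x y G = 0" using GQ unfolding G_def by (simp add: Qdeg_iff)
      have ev0: "ev x y (\<Sum>l\<in>{1..s}. var l * B' l) = 0"
        using evF evG Feq by (simp add: ev_add ev_mult)
      have "(\<Sum>l\<in>{1..s}. var l * B' l) \<in> Qupto x y s (r + 1)"
      proof (rule stepk[OF _ _ Qupto_ideal _ _ B'V ev0])
        show "2 \<le> n" using n by simp
        show "Qdeg x y s (n - 1) \<subseteq> Qupto x y s (r + 1)" using less.IH n by simp
      qed (use hyp1[OF ds b n] in auto)
      moreover have "P * G \<in> Qupto x y s (r + 1)"
        by (rule ideal_in_mult[OF Qupto_ideal _ GQ']) (use PV Vdeg_Vset in auto)
      ultimately show "F \<in> Qupto x y s (r + 1)" unfolding Feq using ideal_in_add[OF Qupto_ideal] by blast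
    qed
  qed
qed

lemma Qker_eq1:
  assumes ds: "d_sequence x s"
    and b: "\<forall>i\<in>{1..s-1}. Jseq x i \<inter> ideal_pow I (r + 1) = ideal_mult (Jseq x i) (ideal_pow I r)"
  shows "Qker x y s = Qupto x y s (r + 1)"
  using Qker_from_deg[OF part1[OF ds b] Qupto_ideal] Qupto_Qker by blast

end

lemma mdeg_eq_0: "mdeg m = 0 \<Longrightarrow> m = 0"
proof -
  assume "mdeg m = 0"
  then have "\<forall>i\<in>Poly_Mapping.keys m. Poly_Mapping.lookup m i = 0" unfolding mdeg_def by simp
  then show "m = 0" by (intro poly_mapping_eqI) (auto simp: in_keys_iff)
qed

lemma Vdeg0: "H \<in> Vdeg s 0 \<Longrightarrow> H = Poly_Mapping.single 0 (Poly_Mapping.lookup H 0)"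
proof -
  assume H: "H \<in> Vdeg s 0"
  show ?thesis
  proof (rule poly_mapping_eqI)
    fix k
    show "Poly_Mapping.lookup H k = Poly_Mapping.lookup (Poly_Mapping.single 0 (Poly_Mapping.lookup H 0)) k"
    proof (cases "k \<in> Poly_Mapping.keys H")
      case True
      then have "k = 0" using H mdeg_eq_0 by (auto simp: Vdeg_def homogeneous_def)
      then show ?thesis by simp
    next
      case False
      then show ?thesis by (auto simp: lookup_single when_def in_keys_iff)
    qed
  qed
qed

lemma psi_mono: "psi (Poly_Mapping.single 0 c * Yv ^ k) = monom c k"
  by (simp add: psi_mult psi_const psi_pow psi_var monom_altdef)

lemma psi_lin:
  assumes "\<And>l. l \<in> K \<Longrightarrow> l \<noteq> 0"
  shows "psi (\<Sum>l\<in>K. var l * B l) = 0"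
proof -
  have "\<forall>l\<in>K. psi (var l * B l) = 0" using assms by (auto simp: psi_mult psi_var)
  then show ?thesis by (simp add: psi_sum)
qed

lemma ev_mono: "ev x y (Poly_Mapping.single 0 c * Yv ^ k) = c * y ^ k"
  by (simp add: ev_mult ev_const ev_pow ev_var)

lemma unit_of_notin:
  assumes loc: "local_ring m" and c: "c \<notin> m"
  shows "\<exists>d. d * c = 1"
proof -
  have "gen {c} = UNIV"
  proof (rule ccontr)
    assume "gen {c} \<noteq> UNIV"
    then have "gen {c} \<subseteq> m" using loc gen_ideal unfolding local_ring_def by blast
    moreover have "c \<in> gen {c}" using gen_in_sub[of "{c}" UNIV] by blast
    ultimately show False using c by blast
  qed
  moreover have "gen {c} = lin (\<lambda>_. c) {0::nat}"
    using gen_lin[of "{0::nat}" "\<lambda>_. c"] by simp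
  ultimately have "1 \<in> lin (\<lambda>_. c) {0::nat}" by simp
  then obtain r where "1 = (\<Sum>l\<in>{0::nat}. r l * c)" by (rule lin_E)
  then show ?thesis by auto
qed

lemma one_notin: "local_ring m \<Longrightarrow> 1 \<notin> m"
proof
  assume loc: "local_ring m" and "1 \<in> m"
  then have "\<And>u. u * 1 \<in> m" unfolding local_ring_def using ideal_UNIV_mult by blast
  then have "m = UNIV" by auto
  then show False using loc unfolding local_ring_def by simp
qed

definition Tpsi :: "nat \<Rightarrow> 'a::comm_ring_1 set \<Rightarrow> 'a mpoly set" where
  "Tpsi s m = {H \<in> Vset s. \<forall>i. coeff (psi H) i \<in> m}"

lemma Tpsi_ideal:
  assumes "ideal m"
  shows "ideal_in (Vset s) (Tpsi s m)"
  unfolding ideal_in_def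
proof (intro conjI ballI)
  show "Tpsi s m \<subseteq> Vset s" by (auto simp: Tpsi_def)
  show "0 \<in> Tpsi s m" using ideal_in_0[OF assms] by (simp add: Tpsi_def psi_def)
next
  fix a b assume "a \<in> Tpsi s m" "b \<in> Tpsi s m"
  then show "a + b \<in> Tpsi s m" using ideal_in_add[OF assms]
    by (auto simp: Tpsi_def psi_add Vset_add)
next
  fix c a :: "'a mpoly" assume c: "c \<in> Vset s" and a: "a \<in> Tpsi s m"
  have "\<And>i. coeff (psi (c * a)) i \<in> m"
  proof -
    fix i
    have "coeff (psi (c * a)) i = (\<Sum>j\<le>i. coeff (psi c) j * coeff (psi a) (i - j))"
      by (simp add: psi_mult coeff_mult)
    also have "\<dots> \<in> m"
      by (rule ideal_in_sum[OF assms], rule ideal_UNIV_mult[OF assms]) (use a in \<open>auto simp: Tpsi_def\<close>)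
    finally show "coeff (psi (c * a)) i \<in> m" .
  qed
  then show "c * a \<in> Tpsi s m" using c a by (auto simp: Tpsi_def Vset_mult)
qed

context rsetup2
begin

lemma r_pos:
  assumes mu: "mu I = s + 1"
  shows "1 \<le> r"
proof (rule ccontr)
  assume "\<not> 1 \<le> r"
  then have r0: "r = 0" by simp
  have "I = ideal_pow I 1" using pow1[OF I_ideal] by simp
  also have "\<dots> = ideal_mult J (ideal_pow I 0)" using red_r r0 by simp
  also have "\<dots> = linB x {1..s} UNIV" using JI_lin[of s 0] by simp
  also have "\<dots> \<subseteq> J" by (rule linB_sub_J)
  finally have "I \<subseteq> J" .
  then have IJ: "I = gen (x ` {1..s})" using J_sub_I[of s] unfolding Jseq_def by auto
  have "(\<lambda>i. x (Suc i)) ` {..<s} = x ` (Suc ` {..<s})" by (simp only: image_image)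
  then have "x ` {1..s} = (\<lambda>i. x (Suc i)) ` {..<s}" by (simp add: image_Suc_lessThan)
  then have "\<exists>g::nat \<Rightarrow> 'a. I = gen (g ` {..<s})" using IJ by metis
  then have "mu I \<le> s" unfolding mu_def by (rule Least_le)
  then show False using mu by simp
qed

lemma Qdeg_Tpsi:
  assumes loc: "local_ring m" and k: "k \<le> r" and H: "H \<in> Qdeg x y s k"
  shows "H \<in> Tpsi s m"
proof -
  have mI: "ideal m" using loc unfolding local_ring_def by blast
  have HV: "H \<in> Vdeg s k" and evH: "ev x y H = 0" using H by (auto simp: Qdeg_iff)
  show ?thesis
  proof (cases "k = 0")
    case True
    then have "H = Poly_Mapping.single 0 (Poly_Mapping.lookup H 0)" using Vdeg0 HV by blast
    moreover then have "Poly_Mapping.lookup H 0 = 0" using evH ev_const by metis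
    ultimately have "H = 0" by simp
    then show ?thesis using ideal_in_0[OF mI] by (simp add: Tpsi_def psi_def)
  next
    case False
    then have k1: "1 \<le> k" by simp
    obtain B where B: "\<forall>l\<in>{1..s}. B l \<in> Vdeg s (k - 1)"
      and Heq: "H = Poly_Mapping.single 0 (Poly_Mapping.lookup H (Poly_Mapping.single 0 k)) * Yv ^ k + (\<Sum>l\<in>{1..s}. var l * B l)"
      using decomp[OF HV] by blast
    define c where "c = Poly_Mapping.lookup H (Poly_Mapping.single 0 k)"
    have pl: "psi (\<Sum>l\<in>{1..s}. var l * B l) = 0" by (rule psi_lin) auto
    have el: "ev x y (\<Sum>l\<in>{1..s}. var l * B l) = (\<Sum>l\<in>{1..s}. x l * ev x y (B l))" by (rule ev_lin) auto
    have psiH: "psi H = monom c k"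
      by (subst Heq) (simp only: psi_add psi_mono pl c_def add_0_right)
    have cm: "c \<in> m"
    proof (rule ccontr)
      assume "c \<notin> m"
      then obtain d where d: "d * c = 1" using unit_of_notin[OF loc] by blast
      have "ev x y H = c * y ^ k + (\<Sum>l\<in>{1..s}. x l * ev x y (B l))"
        by (subst Heq) (simp only: ev_add ev_mono el c_def)
      then have e: "c * y ^ k = - (\<Sum>l\<in>{1..s}. x l * ev x y (B l))" using evH
        by (simp add: eq_neg_iff_add_eq_0)
      have "y ^ k = d * (c * y ^ k)" using d by (simp add: mult.assoc[symmetric])
      also have "\<dots> = (\<Sum>l\<in>{1..s}. x l * (- (d * ev x y (B l))))"
        unfolding e by (simp add: sum_distrib_left sum_negf[symmetric] mult.left_commute)
      finally have yk_eq: "y ^ k = (\<Sum>l\<in>{1..s}. x l * (- (d * ev x y (B l))))" .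
      have bl: "- (d * ev x y (B l)) \<in> ideal_pow I (k - 1)" if l: "l \<in> {1..s}" for l
      proof -
        have "ev x y (B l) \<in> ideal_pow I (k - 1)" using ev_in_pow B l by blast
        then have "d * ev x y (B l) \<in> ideal_pow I (k - 1)" by (rule ideal_UNIV_mult[OF pow_ideal])
        then show ?thesis by (rule ideal_UNIV_uminus[OF pow_ideal])
      qed
      have yk: "y ^ k \<in> linB x {1..s} (ideal_pow I (k - 1))"
        unfolding yk_eq by (rule linB_mem) (rule bl)
      have LI: "ideal (linB x {1..s} (ideal_pow I (k - 1)))" by (rule linB_ideal[OF pow_ideal])
      have sub1: "ideal_pow I k \<subseteq> linB x {1..s} (ideal_pow I (k - 1))"
      proof
        fix u assume "u \<in> ideal_pow I k"
        then obtain H' where H': "H' \<in> Vdeg s k" "ev x y H' = u" using lift by blast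
        obtain B' where B': "\<forall>l\<in>{1..s}. B' l \<in> Vdeg s (k - 1)"
          and H'eq: "H' = Poly_Mapping.single 0 (Poly_Mapping.lookup H' (Poly_Mapping.single 0 k)) * Yv ^ k + (\<Sum>l\<in>{1..s}. var l * B' l)"
          using decomp[OF H'(1)] by blast
        have "u = Poly_Mapping.lookup H' (Poly_Mapping.single 0 k) * y ^ k + (\<Sum>l\<in>{1..s}. x l * ev x y (B' l))"
        proof -
          have el': "ev x y (\<Sum>l\<in>{1..s}. var l * B' l) = (\<Sum>l\<in>{1..s}. x l * ev x y (B' l))" by (rule ev_lin) auto
          show ?thesis unfolding H'(2)[symmetric] by (subst H'eq) (simp only: ev_add ev_mono el')
        qed
        moreover have "(\<Sum>l\<in>{1..s}. x l * ev x y (B' l)) \<in> linB x {1..s} (ideal_pow I (k - 1))"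
          by (rule linB_mem) (use B' ev_in_pow in auto)
        moreover have "Poly_Mapping.lookup H' (Poly_Mapping.single 0 k) * y ^ k \<in> linB x {1..s} (ideal_pow I (k - 1))"
          by (rule ideal_UNIV_mult[OF LI yk])
        ultimately show "u \<in> linB x {1..s} (ideal_pow I (k - 1))" using ideal_in_add[OF LI] by simp
      qed
      have "ideal_pow I (Suc (k - 1)) = ideal_mult J (ideal_pow I (k - 1))"
      proof
        show "ideal_pow I (Suc (k - 1)) \<subseteq> ideal_mult J (ideal_pow I (k - 1))"
          using sub1 k1 JI_lin[of s "k - 1"] by simp
        show "ideal_mult J (ideal_pow I (k - 1)) \<subseteq> ideal_pow I (Suc (k - 1))" by (rule JI_sub) simp
      qed
      then have "r \<le> k - 1" by (rule r_least)
      then show False using k k1 by simp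
    qed
    have "\<forall>i. coeff (psi H) i \<in> m" using cm ideal_in_0[OF mI] by (simp add: psiH coeff_monom)
    then show ?thesis using HV Vdeg_Vset by (auto simp: Tpsi_def)
  qed
qed

lemma Qupto_Tpsi:
  assumes loc: "local_ring m" and N: "N \<le> r"
  shows "Qupto x y s N \<subseteq> Tpsi s m"
proof -
  have mI: "ideal m" using loc unfolding local_ring_def by blast
  show ?thesis
    unfolding Qupto_def
    by (rule gen_in_min[OF Tpsi_ideal[OF mI]], rule UN_least, rule subsetI, rule Qdeg_Tpsi[OF loc])
       (use N in auto)
qed

lemma G_notin:
  assumes loc: "local_ring m"
  shows "Yv ^ (r + 1) - (\<Sum>i=1..s. Xv i * F i) \<notin> Tpsi s m"
proof
  assume "Yv ^ (r + 1) - (\<Sum>i=1..s. Xv i * F i) \<in> Tpsi s m"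
  then have "coeff (psi (Yv ^ (r + 1) - (\<Sum>i=1..s. Xv i * F i))) (r + 1) \<in> m" by (auto simp: Tpsi_def)
  moreover have "psi (Yv ^ (r + 1) - (\<Sum>i=1..s. Xv i * F i)) = monom 1 (r + 1)"
    using psi_mono[of 1 "r + 1"] psi_lin[of "{1..s}" F] by (simp add: psi_diff)
  ultimately have "1 \<in> m" by (simp add: coeff_monom)
  then show False using one_notin[OF loc] by simp
qed

end

context rsetup2
begin

lemma part2:
  assumes mu: "mu I = s + 1" and ds: "d_sequence x s"
    and b: "\<forall>i\<in>{1..s-1}. Jseq x i \<inter> ideal_pow I (r + 1) = ideal_mult (Jseq x i) (ideal_pow I r)"
    and rs: "R_sequence x s"
    and d: "\<forall>i\<in>{1..s-1}. Jseq x i \<inter> ideal_pow I r = ideal_mult (Jseq x i) (ideal_pow I (r - 1))"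
  shows "\<exists>F :: nat \<Rightarrow> 'a mpoly. (\<forall>i\<in>{1..s}. F i \<in> Vdeg s r)
              \<and> Yv ^ (r + 1) - (\<Sum>i=1..s. Xv i * F i) \<in> Qdeg x y s (r + 1)
              \<and> Qker x y s = gen_in (Vset s) (insert (Yv ^ (r + 1) - (\<Sum>i=1..s. Xv i * F i)) (Qupto x y s r))"
proof -
  obtain Fs where Fs: "\<forall>i\<in>{1..s}. Fs i \<in> Vdeg s r" and GQ: "Yv ^ (r + 1) - (\<Sum>i=1..s. Xv i * Fs i) \<in> Qdeg x y s (r + 1)"
    using G_exists by blast
  define G where "G = Yv ^ (r + 1) - (\<Sum>i=1..s. Xv i * Fs i)"
  define T2 where "T2 = gen_in (Vset s) (insert G (Qupto x y s r))"
  have GV: "G \<in> Vset s" using GQ unfolding G_def by (auto simp: Qdeg_iff Vdeg_Vset)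
  have QV: "Qupto x y s r \<subseteq> Vset s" by (rule ideal_in_sub[OF Qupto_ideal])
  have T2I: "ideal_in (Vset s) T2" unfolding T2_def by (rule gen_in_ideal[OF subr_Vset]) (use GV QV in auto)
  have GT: "G \<in> T2" unfolding T2_def using gen_in_sub[of "insert G (Qupto x y s r)" "Vset s"] by blast
  have QT: "Qupto x y s r \<subseteq> T2" unfolding T2_def using gen_in_sub[of "insert G (Qupto x y s r)" "Vset s"] by blast
  have r1: "1 \<le> r" by (rule r_pos[OF mu])
  have degr1: "Qdeg x y s (r + 1) \<subseteq> T2"
  proof
    fix F assume FQ: "F \<in> Qdeg x y s (r + 1)"
    then have FV: "F \<in> Vdeg s (r + 1)" and evF: "ev x y F = 0" by (auto simp: Qdeg_iff)
    obtain B where B: "\<forall>l\<in>{1..s}. B l \<in> Vdeg s (r + 1 - 1)"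
      and Feq0: "F = Poly_Mapping.single 0 (Poly_Mapping.lookup F (Poly_Mapping.single 0 (r + 1))) * Yv ^ (r + 1) + (\<Sum>l\<in>{1..s}. var l * B l)"
      using decomp[OF FV] by blast
    define P :: "'a mpoly" where "P = Poly_Mapping.single 0 (Poly_Mapping.lookup F (Poly_Mapping.single 0 (r + 1)))"
    have PV: "P \<in> Vdeg s 0" unfolding P_def by (rule const_Vdeg)
    define B' where "B' = (\<lambda>l. B l + P * Fs l)"
    define S where "S = (\<Sum>i=1..s. Xv i * Fs i)"
    have e1: "P * S = (\<Sum>l\<in>{1..s}. var l * (P * Fs l))"
      unfolding S_def by (simp add: sum_distrib_left mult.left_commute)
    have e2: "(\<Sum>l\<in>{1..s}. var l * B' l) = (\<Sum>l\<in>{1..s}. var l * B l) + (\<Sum>l\<in>{1..s}. var l * (P * Fs l))"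
      unfolding B'_def by (simp add: distrib_left sum.distrib)
    have GS: "Yv ^ (r + 1) = G + S" unfolding G_def S_def by simp
    have "F = P * (G + S) + (\<Sum>l\<in>{1..s}. var l * B l)"
      by (subst Feq0) (simp only: P_def[symmetric] GS)
    also have "\<dots> = P * G + (P * S + (\<Sum>l\<in>{1..s}. var l * B l))"
      by (simp only: distrib_left add.assoc)
    also have "\<dots> = P * G + (\<Sum>l\<in>{1..s}. var l * B' l)"
      by (simp only: e1 e2 add.commute)
    finally have Feq: "F = P * G + (\<Sum>l\<in>{1..s}. var l * B' l)" .
    have B'V: "\<forall>l\<in>{1..s}. B' l \<in> Vdeg s (r + 1 - 1)"
    proof
      fix l assume l: "l \<in> {1..s}"
      have "P * Fs l \<in> Vdeg s (0 + r)" by (rule Vdeg_mult[OF PV]) (use Fs l in auto)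
      then show "B' l \<in> Vdeg s (r + 1 - 1)" unfolding B'_def using B l by (auto intro: Vdeg_add)
    qed
    have evG: "ev x y G = 0" using GQ unfolding G_def by (simp add: Qdeg_iff)
    have ev0: "ev x y (\<Sum>l\<in>{1..s}. var l * B' l) = 0"
      using evF evG Feq by (simp add: ev_add ev_mult)
    have "(\<Sum>l\<in>{1..s}. var l * B' l) \<in> T2"
    proof (rule stepk[OF _ _ T2I _ _ B'V ev0])
      show "2 \<le> r + 1" using r1 by simp
      show "Qdeg x y s (r + 1 - 1) \<subseteq> T2" using Qdeg_Qupto[of r r] QT by simp
    qed (use hyp2[OF rs d] in auto)
    moreover have "P * G \<in> T2"
      by (rule ideal_in_mult[OF T2I _ GT]) (use PV Vdeg_Vset in auto)
    ultimately show "F \<in> T2" unfolding Feq using ideal_in_add[OF T2I] by blast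
  qed
  have "Qker x y s = T2"
  proof
    have "Qupto x y s (r + 1) \<subseteq> T2"
      unfolding Qupto_def[of x y s "r + 1"]
    proof (rule gen_in_min[OF T2I], rule UN_least)
      fix k assume k: "k \<in> {..r + 1}"
      show "Qdeg x y s k \<subseteq> T2"
      proof (cases "k \<le> r")
        case True then show ?thesis using Qdeg_Qupto[of k r] QT by blast
      next
        case False then have "k = r + 1" using k by simp
        then show ?thesis using degr1 by simp
      qed
    qed
    then show "Qker x y s \<subseteq> T2" using Qker_eq1[OF ds b] by simp
    show "T2 \<subseteq> Qker x y s"
      unfolding T2_def
      by (rule gen_in_min[OF Qker_ideal]) (use GQ Qupto_Qker in \<open>auto simp: G_def Qdeg_def\<close>)
  qed
  then show ?thesis using Fs GQ unfolding T2_def G_def by blast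
qed

lemma rt_eq:
  fixes m :: "'a set"
  assumes loc: "local_ring m" and ds: "d_sequence x s"
    and b: "\<forall>i\<in>{1..s-1}. Jseq x i \<inter> ideal_pow I (r + 1) = ideal_mult (Jseq x i) (ideal_pow I r)"
  shows "rt x y s = r + 1"
  unfolding rt_def
proof (rule Least_equality)
  show "1 \<le> r + 1 \<and> Qker x y s = Qupto x y s (r + 1)" using Qker_eq1[OF ds b] by simp
next
  fix N assume N: "1 \<le> N \<and> Qker x y s = Qupto x y s N"
  show "r + 1 \<le> N"
  proof (rule ccontr)
    assume "\<not> r + 1 \<le> N"
    then have Nr: "N \<le> r" by simp
    obtain Fs where GQ: "Yv ^ (r + 1) - (\<Sum>i=1..s. Xv i * Fs i) \<in> Qdeg x y s (r + 1)"
      using G_exists by blast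
    then have "Yv ^ (r + 1) - (\<Sum>i=1..s. Xv i * Fs i) \<in> Qker x y s" by (simp add: Qdeg_def)
    then have "Yv ^ (r + 1) - (\<Sum>i=1..s. Xv i * Fs i) \<in> Tpsi s m"
      using N Qupto_Tpsi[OF loc Nr] by blast
    then show False using G_notin[OF loc] by blast
  qed
qed

end

theorem mainTheorem4:
  fixes m I :: "'a::comm_ring_1 set" and x :: "nat \<Rightarrow> 'a" and y :: 'a and s r :: nat
  assumes noeth: "noetherian_ring TYPE('a)"
    and local: "local_ring m"
    and I_gen: "I = gen (insert y (x ` {1..s}))"
    and minimal: "mu I = s + 1"
    and red: "is_reduction (Jseq x s) I"
    and r_def: "r = red_num (Jseq x s) I"
    and a: "d_sequence x s"
    and b: "\<forall>i\<in>{1..s-1}. Jseq x i \<inter> ideal_pow I (r + 1) = ideal_mult (Jseq x i) (ideal_pow I r)"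
  shows "rt x y s \<le> r + 1
    \<and> (R_sequence x s
        \<and> (\<forall>i\<in>{1..s-1}. Jseq x i \<inter> ideal_pow I r = ideal_mult (Jseq x i) (ideal_pow I (r - 1)))
       \<longrightarrow> rt x y s = r + 1
         \<and> (\<exists>F :: nat \<Rightarrow> 'a mpoly. (\<forall>i\<in>{1..s}. F i \<in> Vdeg s r)
              \<and> Yv ^ (r + 1) - (\<Sum>i=1..s. Xv i * F i) \<in> Qdeg x y s (r + 1)
              \<and> Qker x y s = gen_in (Vset s) (insert (Yv ^ (r + 1) - (\<Sum>i=1..s. Xv i * F i)) (Qupto x y s r))))"
proof -
  interpret rsetup2 x y s I r
    by unfold_locales (use I_gen red r_def in auto)
  have rt1: "rt x y s \<le> r + 1"
    unfolding rt_def by (rule Least_le) (use Qker_eq1[OF a b] in simp)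
  have rte: "rt x y s = r + 1" by (rule rt_eq[OF local a b])
  show ?thesis using rt1 rte part2[OF minimal a b] by blast
qed

end
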